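(* Let $\mathfrak g$ be a Lie algebra and $r\in\wedge^2\mathfrak g$ a skew-symmetric $r$-matrix. For $k\ge0$ define $\Psi:\wedge^{k+1}\mathfrak g\to\mathrm{Hom}(\wedge^k\mathfrak g^*,\mathfrak g)$ by $\langle\Psi(P)(\xi_1,\dots,\xi_k),\xi_{k+1}\rangle=\langle P,\xi_1\wedge\cdots\wedge\xi_{k+1}\rangle$. Then for all $P\in\wedge^{p+1}\mathfrak g$ and $Q\in\wedge^{q+1}\mathfrak g$, $$\Psi([P,Q])=(-1)^{pq}[\![\Psi(P),\Psi(Q)]\!],\qquad \Psi([r,P])=(-1)^p[\![r^\sharp,\Psi(P)]\!].$$
   Context: $[\cdot,\cdot]$ on $\wedge^\bullet\mathfrak g=\bigoplus_k\wedge^{k+1}\mathfrak g$ (elements of $\wedge^{k+1}\mathfrak g$ of degree $k$) is the Gerstenhaber bracket $[x_1\wedge\cdots\wedge x_p,y_1\wedge\cdots\wedge y_q]=\sum_{i,j}(-1)^{i+j}[x_i,y_j]\wedge x_1\wedge\cdots\widehat{x_i}\cdots\wedge x_p\wedge y_1\wedge\cdots\widehat{y_j}\cdots\wedge y_q$. A skew-symmetric $r$-matrix is $r\in\wedge^2\mathfrak g$ with $[r,r]=0$, and $r^\sharp=\Psi(r):\mathfrak g^*\to\mathfrak g$, $\langle r^\sharp\xi,\eta\rangle=\langle r,\xi\wedge\eta\rangle$. The pairing between $\wedge^k\mathfrak g$ and $\wedge^k\mathfrak g^*$ is the natural one. The bracket $[\![\cdot,\cdot]\!]$ on $\bigoplus_k\mathrm{Hom}(\wedge^k\mathfrak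 g^*,\mathfrak g)$ is associated with the coadjoint representation $\rho=\mathrm{ad}^*$, $\langle\mathrm{ad}^*_x\xi,y\rangle=-\langle\xi,[x,y]\rangle$, by the formula $[\![P,Q]\!](u_1,\dots,u_{m+n})=\sum_{\sigma\in\mathbb S_{(m,1,n-1)}}(-1)^{\sigma}P(\rho(Q(u_{\sigma(1)},\dots,u_{\sigma(m)}))u_{\sigma(m+1)},u_{\sigma(m+2)},\dots,u_{\sigma(m+n)})-(-1)^{mn}\sum_{\sigma\in\mathbb S_{(n,1,m-1)}}(-1)^{\sigma}Q(\rho(P(u_{\sigma(1)},\dots,u_{\sigma(n)}))u_{\sigma(n+1)},u_{\sigma(n+2)},\dots,u_{\sigma(m+n)})+(-1)^{mn}\sum_{\sigma\in\mathbb S_{(n,m)}}(-1)^{\sigma}[P(u_{\sigma(1)},\dots,u_{\sigma(n)}),Q(u_{\sigma(n+1)},\dots,u_{\sigma(m+n)})]$ for $P\in\mathrm{Hom}(\wedge^n\mathfrak g^*,\mathfrak g)$, $Q\in\mathrm{Hom}(\wedge^m\mathfrak g^*,\mathfrak g)$, $u_i\in\mathfrak g^*$; $\mathbb S_{(i_1,\dots,i_k)}$ denotes unshuffles. *)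

theory Defs
  imports Complex_Main "HOL-Combinatorics.Permutations"
begin

definition lie_algebra :: "('k::field \<Rightarrow> 'g::ab_group_add \<Rightarrow> 'g) \<Rightarrow> ('g \<Rightarrow> 'g \<Rightarrow> 'g) \<Rightarrow> bool" where
  "lie_algebra scale br \<longleftrightarrow>
     vector_space scale \<and>
     (\<forall>x. Vector_Spaces.linear scale scale (br x)) \<and>
     (\<forall>y. Vector_Spaces.linear scale scale (\<lambda>x. br x y)) \<and>
     (\<forall>x. br x x = 0) \<and>
     (\<forall>x y z. br x (br y z) + br y (br z x) + br z (br x y) = 0)"

definition dual_elem :: "('k::field \<Rightarrow> 'g::ab_group_add \<Rightarrow> 'g) \<Rightarrow> ('g \<Rightarrow> 'k) \<Rightarrow> bool" where
  "dual_elem scale u \<longleftrightarrow> Vector_Spaces.linear scale (*) u"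

text \<open>Multivectors: an element of wedge^k g is given as a finite formal linear
  combination of decomposables x_1 \<and> ... \<and> x_k, each represented by the list [x_1,...,x_k].\<close>
type_synonym ('k, 'g) mvec = "('k \<times> 'g list) list"

definition is_mvec :: "nat \<Rightarrow> ('k, 'g) mvec \<Rightarrow> bool" where
  "is_mvec k P \<longleftrightarrow> (\<forall>t\<in>set P. length (snd t) = k)"

definition det_pair :: "'g list \<Rightarrow> ('g \<Rightarrow> 'k::field) list \<Rightarrow> 'k" where
  "det_pair xs us =
     (if length xs = length us then
        (\<Sum>\<sigma> | \<sigma> permutes {..<length us}.
            of_int (sign \<sigma>) * (\<Prod>i<length us. (us ! i) (xs ! \<sigma> i)))
      else 0)"

definition pair :: "('k::field, 'g) mvec \<Rightarrow> ('g \<Rightarrow> 'k) list \<Rightarrow> 'k" where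
  "pair P us = (\<Sum>t\<leftarrow>P. fst t * det_pair (snd t) us)"

definition mvec_zero :: "('k::field \<Rightarrow> 'g::ab_group_add \<Rightarrow> 'g) \<Rightarrow> nat \<Rightarrow> ('k, 'g) mvec \<Rightarrow> bool" where
  "mvec_zero scale k P \<longleftrightarrow>
     (\<forall>us. length us = k \<longrightarrow> (\<forall>u\<in>set us. dual_elem scale u) \<longrightarrow> pair P us = 0)"

definition Psi :: "('k::field \<Rightarrow> 'g::ab_group_add \<Rightarrow> 'g) \<Rightarrow> ('k, 'g) mvec \<Rightarrow> ('g \<Rightarrow> 'k) list \<Rightarrow> 'g" where
  "Psi scale P us = (THE x. \<forall>\<eta>. dual_elem scale \<eta> \<longrightarrow> \<eta> x = pair P (us @ [\<eta>]))"

text \<open>Gerstenhaber (Schouten) bracket of decomposables, indices counted from 0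
  (the sign (-1)^(i+j) is unchanged), extended bilinearly.\<close>
definition gerst_dec :: "('g \<Rightarrow> 'g \<Rightarrow> 'g) \<Rightarrow> 'g list \<Rightarrow> 'g list \<Rightarrow> ('k::field, 'g) mvec" where
  "gerst_dec br xs ys =
     concat (map (\<lambda>i. map (\<lambda>j. ((-1) ^ (i + j),
        br (xs ! i) (ys ! j) # (take i xs @ drop (Suc i) xs) @ (take j ys @ drop (Suc j) ys)))
        [0..<length ys]) [0..<length xs])"

definition gerst :: "('g \<Rightarrow> 'g \<Rightarrow> 'g) \<Rightarrow> ('k::field, 'g) mvec \<Rightarrow> ('k, 'g) mvec \<Rightarrow> ('k, 'g) mvec" where
  "gerst br P Q =
     concat (map (\<lambda>s. concat (map (\<lambda>t.
        map (\<lambda>c. (fst s * fst t * fst c, snd c)) (gerst_dec br (snd s) (snd t))) Q)) P)"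

definition ad_star :: "('g \<Rightarrow> 'g \<Rightarrow> 'g) \<Rightarrow> 'g \<Rightarrow> ('g \<Rightarrow> 'k::field) \<Rightarrow> ('g \<Rightarrow> 'k)" where
  "ad_star br x \<xi> = (\<lambda>y. - \<xi> (br x y))"

definition unshuffle2 :: "nat \<Rightarrow> nat \<Rightarrow> (nat \<Rightarrow> nat) set" where
  "unshuffle2 a b = {\<sigma>. \<sigma> permutes {..<a+b} \<and> strict_mono_on {..<a} \<sigma> \<and> strict_mono_on {a..<a+b} \<sigma>}"

definition unshuffle3 :: "nat \<Rightarrow> nat \<Rightarrow> nat \<Rightarrow> (nat \<Rightarrow> nat) set" where
  "unshuffle3 a b c = {\<sigma>. \<sigma> permutes {..<a+b+c} \<and> strict_mono_on {..<a} \<sigma>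
      \<and> strict_mono_on {a..<a+b} \<sigma> \<and> strict_mono_on {a+b..<a+b+c} \<sigma>}"

text \<open>Elements of Hom(wedge^n g^*, g) are represented as functions on lists of
  n covectors.  The bracket [[P,Q]] for P of arity n and Q of arity m
  (evaluated on a list us = [u_1,...,u_(m+n)]), with rho = ad^*.
  The sum over S_(m,1,n-1) is empty when n = 0, and that over S_(n,1,m-1) when m = 0.\<close>
definition hbr :: "('k::field \<Rightarrow> 'g::ab_group_add \<Rightarrow> 'g) \<Rightarrow> ('g \<Rightarrow> 'g \<Rightarrow> 'g) \<Rightarrow> nat \<Rightarrow> nat
    \<Rightarrow> (('g \<Rightarrow> 'k) list \<Rightarrow> 'g) \<Rightarrow> (('g \<Rightarrow> 'k) list \<Rightarrow> 'g) \<Rightarrow> ('g \<Rightarrow> 'k) list \<Rightarrow> 'g" where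
  "hbr scale br n m P Q us =
     (let u = (\<lambda>\<sigma> ids. map (\<lambda>i. us ! \<sigma> i) ids) in
       (if n = 0 then 0 else
         (\<Sum>\<sigma>\<in>unshuffle3 m 1 (n - 1).
            scale (of_int (sign \<sigma>))
              (P (ad_star br (Q (u \<sigma> [0..<m])) (us ! \<sigma> m) # u \<sigma> [m+1..<m+n]))))
     - scale ((-1) ^ (m * n))
       (if m = 0 then 0 else
         (\<Sum>\<sigma>\<in>unshuffle3 n 1 (m - 1).
            scale (of_int (sign \<sigma>))
              (Q (ad_star br (P (u \<sigma> [0..<n])) (us ! \<sigma> n) # u \<sigma> [n+1..<m+n]))))
     + scale ((-1) ^ (m * n))
         (\<Sum>\<sigma>\<in>unshuffle2 n m.
            scale (of_int (sign \<sigma>)) (br (P (u \<sigma> [0..<n])) (Q (u \<sigma> [n..<n+m])))))"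

end

theory Submission
  imports Defs "Jordan_Normal_Form.Determinant"
begin


definition dl :: "nat \<Rightarrow> 'a list \<Rightarrow> 'a list" where
  "dl k xs = take k xs @ drop (Suc k) xs"

lemma length_dl[simp]: "k < length xs \<Longrightarrow> length (dl k xs) = length xs - 1"
  by (simp add: dl_def)

lemma nth_dl: "k < length xs \<Longrightarrow> i < length xs - 1 \<Longrightarrow>
   dl k xs ! i = (if i < k then xs ! i else xs ! Suc i)"
  by (auto simp: dl_def nth_append min_def)

fun D :: "'g list \<Rightarrow> ('g \<Rightarrow> 'k::field) list \<Rightarrow> 'k" where
  "D xs [] = (if xs = [] then 1 else 0)"
| "D xs (u # us) = (\<Sum>k<length xs. (-1)^k * u (xs!k) * D (dl k xs) us)"

lemma D_len: "length xs \<noteq> length us \<Longrightarrow> D xs us = 0"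
proof (induction us arbitrary: xs)
  case Nil then show ?case by simp
next
  case (Cons u us)
  have "D (dl k xs) us = 0" if "k < length xs" for k
    using Cons.prems that by (intro Cons.IH) simp
  then show ?case by simp
qed

definition Mt :: "('g \<Rightarrow> 'k::field) list \<Rightarrow> 'g list \<Rightarrow> 'k mat" where
  "Mt us xs = mat (length us) (length xs) (\<lambda>(i,j). (us!i) (xs!j))"

lemma det_pair_Mt: assumes "length xs = length us" shows "det_pair xs us = det (Mt us xs)"
proof -
  have "det (Mt us xs) = (\<Sum>p \<in> {p. p permutes {0..<length us}}. of_int (sign p) * (\<Prod>i = 0..<length us. Mt us xs $$ (i, p i)))"
    unfolding det_def using assms by (simp add: Mt_def)
  also have "\<dots> = det_pair xs us"
    unfolding det_pair_def using assms
    by (auto simp: atLeast0LessThan Mt_def permutes_in_image intro!: sum.cong prod.cong)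
  finally show ?thesis ..
qed

lemma D_det: "length xs = length us \<Longrightarrow> D xs us = det (Mt us xs)"
proof (induction us arbitrary: xs)
  case Nil
  then show ?case by (simp add: Mt_def det_def)
next
  case (Cons u us)
  let ?n = "length xs"
  have car: "Mt (u#us) xs \<in> carrier_mat ?n ?n" using Cons.prems by (simp add: Mt_def)
  have "det (Mt (u#us) xs) = (\<Sum>j<?n. Mt (u#us) xs $$ (0,j) * cofactor (Mt (u#us) xs) 0 j)"
    by (rule laplace_expansion_row[OF car]) (use Cons.prems in simp)
  also have "\<dots> = (\<Sum>j<?n. (-1)^j * u (xs!j) * D (dl j xs) us)"
  proof (rule sum.cong[OF refl])
    fix j assume j: "j \<in> {..<?n}"
    have md: "mat_delete (Mt (u#us) xs) 0 j = Mt us (dl j xs)"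
      using j Cons.prems
      by (intro eq_matI) (auto simp: mat_delete_def Mt_def nth_dl)
    have "D (dl j xs) us = det (Mt us (dl j xs))"
      using j Cons.prems by (intro Cons.IH) simp
    moreover have "Mt (u#us) xs $$ (0,j) = u (xs!j)" using j Cons.prems by (simp add: Mt_def)
    ultimately show "Mt (u#us) xs $$ (0,j) * cofactor (Mt (u#us) xs) 0 j = (-1)^j * u (xs!j) * D (dl j xs) us"
      by (simp add: cofactor_def md)
  qed
  finally show ?case by simp
qed

lemma det_pair_D: "det_pair xs us = D xs us"
proof (cases "length xs = length us")
  case True then show ?thesis by (simp add: det_pair_Mt D_det)
next
  case False then show ?thesis by (simp add: D_len det_pair_def)
qed

lemma D_swap: "D xs (a # b # w) = - D xs (b # a # w)"
proof (cases "length xs = length (a#b#w)")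
  case True
  have "swaprows 0 1 (Mt (a#b#w) xs) = Mt (b#a#w) xs"
    by (intro eq_matI) (auto simp: Mt_def nth_Cons split: nat.splits)
  moreover have "det (swaprows 0 1 (Mt (a#b#w) xs)) = - det (Mt (a#b#w) xs)"
    by (rule det_swaprows[of _ "length xs"]) (use True in \<open>auto simp: Mt_def\<close>)
  moreover have "D xs (a#b#w) = det (Mt (a#b#w) xs)" by (rule D_det) (use True in simp)
  moreover have "D xs (b#a#w) = det (Mt (b#a#w) xs)" by (rule D_det) (use True in simp)
  ultimately show ?thesis by simp
next
  case False
  then show ?thesis by (simp add: D_len)
qed

lemma D_snoc: "D xs (w @ [e]) = (-1)^length w * D xs (e # w)"
proof (induction w arbitrary: xs)
  case Nil then show ?case by simp
next
  case (Cons a w)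
  have "D xs ((a#w) @ [e]) = (\<Sum>k<length xs. (-1)^k * a (xs!k) * ((-1)^length w * D (dl k xs) (e#w)))"
    by (simp add: Cons.IH)
  also have "\<dots> = (-1)^length w * D xs (a#e#w)"
    by (simp add: sum_distrib_left algebra_simps)
  also have "\<dots> = (-1)^length (a#w) * D xs (e#a#w)"
    by (subst D_swap) simp
  finally show ?case .
qed


fun S2 :: "nat \<Rightarrow> nat \<Rightarrow> 'a list \<Rightarrow> (int \<Rightarrow> 'a list \<Rightarrow> 'a list \<Rightarrow> 'b::ab_group_add) \<Rightarrow> 'b" where
  "S2 a b [] F = (if a = 0 \<and> b = 0 then F 1 [] [] else 0)"
| "S2 a b (u#w) F = (if 0 < a then S2 (a-1) b w (\<lambda>s A B. F s (u#A) B) else 0)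
     + (if 0 < b then S2 a (b-1) w (\<lambda>s A B. F ((-1)^a * s) A (u#B)) else 0)"

fun S3 :: "nat \<Rightarrow> nat \<Rightarrow> nat \<Rightarrow> 'a list \<Rightarrow> (int \<Rightarrow> 'a list \<Rightarrow> 'a list \<Rightarrow> 'a list \<Rightarrow> 'b::ab_group_add) \<Rightarrow> 'b" where
  "S3 a b c [] F = (if a = 0 \<and> b = 0 \<and> c = 0 then F 1 [] [] [] else 0)"
| "S3 a b c (u#w) F = (if 0 < a then S3 (a-1) b c w (\<lambda>s A B C. F s (u#A) B C) else 0)
     + (if 0 < b then S3 a (b-1) c w (\<lambda>s A B C. F ((-1)^a * s) A (u#B) C) else 0)
     + (if 0 < c then S3 a b (c-1) w (\<lambda>s A B C. F ((-1)^(a+b) * s) A B (u#C)) else 0)"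

declare S2.simps[simp del] S3.simps[simp del]

lemma S2_hom:
  assumes "\<And>x y. h (x + y) = h x + h y" "h 0 = 0"
  shows "h (S2 a b w F) = S2 a b w (\<lambda>s A B. h (F s A B))"
  by (induction w arbitrary: a b F) (auto simp: S2.simps assms)

lemma S3_hom:
  assumes "\<And>x y. h (x + y) = h x + h y" "h 0 = 0"
  shows "h (S3 a b c w F) = S3 a b c w (\<lambda>s A B C. h (F s A B C))"
  by (induction w arbitrary: a b c F) (auto simp: S3.simps assms)

lemma S2_sum:
  "S2 a b w (\<lambda>s A B. \<Sum>i\<in>I. F i s A B) = (\<Sum>i\<in>I. S2 a b w (F i))"
  by (induction w arbitrary: a b F) (auto simp: S2.simps sum.distrib)

lemma S3_sum:
  "S3 a b c w (\<lambda>s A B C. \<Sum>i\<in>I. F i s A B C) = (\<Sum>i\<in>I. S3 a b c w (F i))"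
  by (induction w arbitrary: a b c F) (auto simp: S3.simps sum.distrib)

lemma S2_add:
  "S2 a b w (\<lambda>s A B. F s A B + G s A B) = S2 a b w F + S2 a b w G"
  by (induction w arbitrary: a b F G) (auto simp: S2.simps)

lemma S3_add:
  "S3 a b c w (\<lambda>s A B C. F s A B C + G s A B C) = S3 a b c w F + S3 a b c w G"
  by (induction w arbitrary: a b c F G) (auto simp: S3.simps)

lemma S2_cong:
  "(\<And>s A B. length A = a \<Longrightarrow> length B = b \<Longrightarrow> F s A B = G s A B) \<Longrightarrow> S2 a b w F = S2 a b w G"
proof (induction w arbitrary: a b F G)
  case Nil then show ?case by (simp add: S2.simps)
next
  case (Cons u w)
  show ?case unfolding S2.simps
    by (intro arg_cong2[where f="(+)"] if_cong refl Cons.IH) (auto intro: Cons.prems)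
qed

lemma S3_cong:
  "(\<And>s A B C. length A = a \<Longrightarrow> length B = b \<Longrightarrow> length C = c \<Longrightarrow> F s A B C = G s A B C)
    \<Longrightarrow> S3 a b c w F = S3 a b c w G"
proof (induction w arbitrary: a b c F G)
  case Nil then show ?case by (simp add: S3.simps)
next
  case (Cons u w)
  show ?case unfolding S3.simps
    by (intro arg_cong2[where f="(+)"] if_cong refl Cons.IH) (auto intro: Cons.prems)
qed

lemma S3_zero1: "S3 0 b c w F = S2 b c w (\<lambda>s B C. F s [] B C)"
  by (induction w arbitrary: b c F) (auto simp: S3.simps S2.simps)

lemma sgn_eq: "even m = even n \<Longrightarrow> (-1::int)^m = (-1)^n"
  by (metis neg_one_even_power neg_one_odd_power)

lemma sgn_mult: "(-1::int)^m * ((-1)^n * s) = (-1)^(m+n) * s"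
  by (simp add: power_add)

lemma sgn_eqs: "even m = even n \<Longrightarrow> (-1::int)^m * s = (-1)^n * s"
  using sgn_eq by metis

lemma S3_swap12:
  "S3 a b c w F = S3 b a c w (\<lambda>s B A C. F ((-1)^(a*b) * s) A B C)"
proof (induction w arbitrary: a b c F)
  case Nil then show ?case by (simp add: S3.simps)
next
  case (Cons u w)
  have t1: "(if 0 < a then S3 (a-1) b c w (\<lambda>s A B C. F s (u#A) B C) else 0)
     = (if 0 < a then S3 b (a-1) c w (\<lambda>s B A C. F ((-1)^(a*b) * ((-1)^b * s)) (u#A) B C) else 0)"
  proof (cases "0 < a")
    case True
    have sg: "(-1)^((a-1)*b) * s = (-1)^(a*b) * ((-1)^b * s)" for s :: int
      unfolding sgn_mult using True by (intro sgn_eqs) (cases a, auto)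
    have "S3 (a-1) b c w (\<lambda>s A B C. F s (u#A) B C) = S3 b (a-1) c w (\<lambda>s B A C. F ((-1)^(a*b) * ((-1)^b * s)) (u#A) B C)"
      by (subst Cons.IH) (simp only: sg)
    then show ?thesis by (simp only: if_P[OF True])
  qed simp
  have t2: "(if 0 < b then S3 a (b-1) c w (\<lambda>s A B C. F ((-1)^a * s) A (u#B) C) else 0)
     = (if 0 < b then S3 (b-1) a c w (\<lambda>s B A C. F ((-1)^(a*b) * s) A (u#B) C) else 0)"
  proof (cases "0 < b")
    case True
    have sg: "(-1)^a * ((-1)^(a*(b-1)) * s) = (-1)^(a*b) * s" for s :: int
      unfolding sgn_mult using True by (intro sgn_eqs) (cases b, auto)
    have "S3 a (b-1) c w (\<lambda>s A B C. F ((-1)^a * s) A (u#B) C) = S3 (b-1) a c w (\<lambda>s B A C. F ((-1)^(a*b) * s) A (u#B) C)"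
      by (subst Cons.IH) (simp only: sg)
    then show ?thesis by (simp only: if_P[OF True])
  qed simp
  have t3: "(if 0 < c then S3 a b (c-1) w (\<lambda>s A B C. F ((-1)^(a+b) * s) A B (u#C)) else 0)
     = (if 0 < c then S3 b a (c-1) w (\<lambda>s B A C. F ((-1)^(a*b) * ((-1)^(b+a) * s)) A B (u#C)) else 0)"
  proof (cases "0 < c")
    case True
    have sg: "(-1)^(a+b) * ((-1)^(a*b) * s) = (-1)^(a*b) * ((-1)^(b+a) * s)" for s :: int
      by (simp add: algebra_simps)
    have "S3 a b (c-1) w (\<lambda>s A B C. F ((-1)^(a+b) * s) A B (u#C)) = S3 b a (c-1) w (\<lambda>s B A C. F ((-1)^(a*b) * ((-1)^(b+a) * s)) A B (u#C))"
      by (subst Cons.IH) (simp only: sg)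
    then show ?thesis by (simp only: if_P[OF True])
  qed simp
  show ?case unfolding S3.simps(2) t1 t2 t3 by (simp add: algebra_simps)
qed

lemma S3_swap23:
  "S3 a b c w F = S3 a c b w (\<lambda>s A C B. F ((-1)^(b*c) * s) A B C)"
proof (induction w arbitrary: a b c F)
  case Nil then show ?case by (simp add: S3.simps)
next
  case (Cons u w)
  have t1: "(if 0 < a then S3 (a-1) b c w (\<lambda>s A B C. F s (u#A) B C) else 0)
     = (if 0 < a then S3 (a-1) c b w (\<lambda>s A C B. F ((-1)^(b*c) * s) (u#A) B C) else 0)"
  proof (cases "0 < a")
    case True
    have "S3 (a-1) b c w (\<lambda>s A B C. F s (u#A) B C) = S3 (a-1) c b w (\<lambda>s A C B. F ((-1)^(b*c) * s) (u#A) B C)"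
      by (subst Cons.IH) (simp only:)
    then show ?thesis by (simp only: if_P[OF True])
  qed simp
  have t2: "(if 0 < b then S3 a (b-1) c w (\<lambda>s A B C. F ((-1)^a * s) A (u#B) C) else 0)
     = (if 0 < b then S3 a c (b-1) w (\<lambda>s A C B. F ((-1)^(b*c) * ((-1)^(a+c) * s)) A (u#B) C) else 0)"
  proof (cases "0 < b")
    case True
    have sg: "(-1)^a * ((-1)^((b-1)*c) * s) = (-1)^(b*c) * ((-1)^(a+c) * s)" for s :: int
      unfolding sgn_mult using True by (intro sgn_eqs) (cases b, auto)
    have "S3 a (b-1) c w (\<lambda>s A B C. F ((-1)^a * s) A (u#B) C) = S3 a c (b-1) w (\<lambda>s A C B. F ((-1)^(b*c) * ((-1)^(a+c) * s)) A (u#B) C)"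
      by (subst Cons.IH) (simp only: sg)
    then show ?thesis by (simp only: if_P[OF True])
  qed simp
  have t3: "(if 0 < c then S3 a b (c-1) w (\<lambda>s A B C. F ((-1)^(a+b) * s) A B (u#C)) else 0)
     = (if 0 < c then S3 a (c-1) b w (\<lambda>s A C B. F ((-1)^(b*c) * ((-1)^a * s)) A B (u#C)) else 0)"
  proof (cases "0 < c")
    case True
    have sg: "(-1)^(a+b) * ((-1)^(b*(c-1)) * s) = (-1)^(b*c) * ((-1)^a * s)" for s :: int
      unfolding sgn_mult using True by (intro sgn_eqs) (cases c, auto)
    have "S3 a b (c-1) w (\<lambda>s A B C. F ((-1)^(a+b) * s) A B (u#C)) = S3 a (c-1) b w (\<lambda>s A C B. F ((-1)^(b*c) * ((-1)^a * s)) A B (u#C))"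
      by (subst Cons.IH) (simp only: sg)
    then show ?thesis by (simp only: if_P[OF True])
  qed simp
  show ?case unfolding S3.simps(2) t1 t2 t3 by (simp add: algebra_simps)
qed

lemma S3_rot:
  "S3 a b c w F = S3 c a b w (\<lambda>s C A B. F ((-1)^(c*(a+b)) * s) A B C)"
proof -
  have sg: "(-1)^(b*c) * ((-1)^(a*c) * s) = (-1)^(c*(a+b)) * s" for s :: int
    unfolding sgn_mult by (simp add: algebra_simps)
  have "S3 a b c w F = S3 a c b w (\<lambda>s A C B. F ((-1)^(b*c) * s) A B C)" by (rule S3_swap23)
  also have "\<dots> = S3 c a b w (\<lambda>s C A B. F ((-1)^(b*c) * ((-1)^(a*c) * s)) A B C)"
    by (subst S3_swap12) (simp only:)
  also have "\<dots> = S3 c a b w (\<lambda>s C A B. F ((-1)^(c*(a+b)) * s) A B C)"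
    by (simp only: sg)
  finally show ?thesis .
qed

lemma sum_lessThan_add: "(\<Sum>k<m+(n::nat). f k) = (\<Sum>k<m. f k) + (\<Sum>k<n. f (m+k))"
  by (induction n) (auto simp: add.assoc)

lemma S3_cmult: "(x::'b::comm_ring) * S3 a b c w F = S3 a b c w (\<lambda>s A B C. x * F s A B C)"
  by (rule S3_hom) (auto simp: distrib_left)

lemma S2_cmult: "(x::'b::comm_ring) * S2 a b w F = S2 a b w (\<lambda>s A B. x * F s A B)"
  by (rule S2_hom) (auto simp: distrib_left)

lemma Laplace3:
  "D (A @ B @ C) v = S3 (length A) (length B) (length C) v
      (\<lambda>s V0 V1 V2. of_int s * D A V0 * D B V1 * D C V2)"
proof (induction v arbitrary: A B C)
  case Nil then show ?case by (simp add: S3.simps)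
next
  case (Cons u v)
  let ?a = "length A" and ?b = "length B" and ?c = "length C"
  have "D (A @ B @ C) (u#v) = (\<Sum>k<?a+?b+?c. (-1)^k * u ((A@B@C)!k) * D (dl k (A@B@C)) v)"
    by (simp add: add.assoc)
  also have "\<dots> = (\<Sum>k<?a. (-1)^k * u (A!k) * D (dl k A @ B @ C) v)
     + (\<Sum>k<?b. (-1)^(?a+k) * u (B!k) * D (A @ dl k B @ C) v)
     + (\<Sum>k<?c. (-1)^(?a+?b+k) * u (C!k) * D (A @ B @ dl k C) v)"
    unfolding sum_lessThan_add
    by (intro arg_cong2[where f="(+)"] sum.cong refl)
       (auto simp: nth_append dl_def add.assoc)
  also have "\<dots> = (if 0 < ?a then S3 (?a-1) ?b ?c v (\<lambda>s V0 V1 V2. of_int s * D A (u#V0) * D B V1 * D C V2) else 0)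
     + (if 0 < ?b then S3 ?a (?b-1) ?c v (\<lambda>s V0 V1 V2. of_int ((-1)^?a * s) * D A V0 * D B (u#V1) * D C V2) else 0)
     + (if 0 < ?c then S3 ?a ?b (?c-1) v (\<lambda>s V0 V1 V2. of_int ((-1)^(?a+?b) * s) * D A V0 * D B V1 * D C (u#V2)) else 0)"
  proof (intro arg_cong2[where f="(+)"])
    show "(\<Sum>k<?a. (-1)^k * u (A!k) * D (dl k A @ B @ C) v) =
      (if 0 < ?a then S3 (?a-1) ?b ?c v (\<lambda>s V0 V1 V2. of_int s * D A (u#V0) * D B V1 * D C V2) else 0)"
    proof (cases "0 < ?a")
      case True
      have "(\<Sum>k<?a. (-1)^k * u (A!k) * D (dl k A @ B @ C) v) =
        (\<Sum>k<?a. S3 (?a-1) ?b ?c v (\<lambda>s V0 V1 V2. (-1)^k * u (A!k) * (of_int s * D (dl k A) V0 * D B V1 * D C V2)))"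
      proof (intro sum.cong refl)
        fix k assume k: "k \<in> {..<?a}"
        have "D (dl k A @ B @ C) v = S3 (?a-1) ?b ?c v (\<lambda>s V0 V1 V2. of_int s * D (dl k A) V0 * D B V1 * D C V2)"
          using k by (simp add: Cons.IH)
        then show "(-1)^k * u (A!k) * D (dl k A @ B @ C) v = S3 (?a-1) ?b ?c v (\<lambda>s V0 V1 V2. (-1)^k * u (A!k) * (of_int s * D (dl k A) V0 * D B V1 * D C V2))"
          by (simp add: S3_cmult)
      qed
      also have "\<dots> = S3 (?a-1) ?b ?c v (\<lambda>s V0 V1 V2. \<Sum>k<?a. (-1)^k * u (A!k) * (of_int s * D (dl k A) V0 * D B V1 * D C V2))"
        by (rule S3_sum[symmetric])
      also have "\<dots> = S3 (?a-1) ?b ?c v (\<lambda>s V0 V1 V2. of_int s * D A (u#V0) * D B V1 * D C V2)"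
        by (simp add: sum_distrib_left sum_distrib_right algebra_simps)
      finally show ?thesis using True by simp
    qed simp
  next
    show "(\<Sum>k<?b. (-1)^(?a+k) * u (B!k) * D (A @ dl k B @ C) v) =
      (if 0 < ?b then S3 ?a (?b-1) ?c v (\<lambda>s V0 V1 V2. of_int ((-1)^?a * s) * D A V0 * D B (u#V1) * D C V2) else 0)"
    proof (cases "0 < ?b")
      case True
      have "(\<Sum>k<?b. (-1)^(?a+k) * u (B!k) * D (A @ dl k B @ C) v) =
        (\<Sum>k<?b. S3 ?a (?b-1) ?c v (\<lambda>s V0 V1 V2. (-1)^(?a+k) * u (B!k) * (of_int s * D A V0 * D (dl k B) V1 * D C V2)))"
      proof (intro sum.cong refl)
        fix k assume k: "k \<in> {..<?b}"
        have "D (A @ dl k B @ C) v = S3 ?a (?b-1) ?c v (\<lambda>s V0 V1 V2. of_int s * D A V0 * D (dl k B) V1 * D C V2)"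
          using k by (simp add: Cons.IH)
        then show "(-1)^(?a+k) * u (B!k) * D (A @ dl k B @ C) v = S3 ?a (?b-1) ?c v (\<lambda>s V0 V1 V2. (-1)^(?a+k) * u (B!k) * (of_int s * D A V0 * D (dl k B) V1 * D C V2))"
          by (simp add: S3_cmult)
      qed
      also have "\<dots> = S3 ?a (?b-1) ?c v (\<lambda>s V0 V1 V2. \<Sum>k<?b. (-1)^(?a+k) * u (B!k) * (of_int s * D A V0 * D (dl k B) V1 * D C V2))"
        by (rule S3_sum[symmetric])
      also have "\<dots> = S3 ?a (?b-1) ?c v (\<lambda>s V0 V1 V2. of_int ((-1)^?a * s) * D A V0 * D B (u#V1) * D C V2)"
        by (simp add: sum_distrib_left sum_distrib_right power_add algebra_simps)
      finally show ?thesis using True by simp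
    qed simp
  next
    show "(\<Sum>k<?c. (-1)^(?a+?b+k) * u (C!k) * D (A @ B @ dl k C) v) =
      (if 0 < ?c then S3 ?a ?b (?c-1) v (\<lambda>s V0 V1 V2. of_int ((-1)^(?a+?b) * s) * D A V0 * D B V1 * D C (u#V2)) else 0)"
    proof (cases "0 < ?c")
      case True
      have "(\<Sum>k<?c. (-1)^(?a+?b+k) * u (C!k) * D (A @ B @ dl k C) v) =
        (\<Sum>k<?c. S3 ?a ?b (?c-1) v (\<lambda>s V0 V1 V2. (-1)^(?a+?b+k) * u (C!k) * (of_int s * D A V0 * D B V1 * D (dl k C) V2)))"
      proof (intro sum.cong refl)
        fix k assume k: "k \<in> {..<?c}"
        have "D (A @ B @ dl k C) v = S3 ?a ?b (?c-1) v (\<lambda>s V0 V1 V2. of_int s * D A V0 * D B V1 * D (dl k C) V2)"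
          using k by (simp add: Cons.IH)
        then show "(-1)^(?a+?b+k) * u (C!k) * D (A @ B @ dl k C) v = S3 ?a ?b (?c-1) v (\<lambda>s V0 V1 V2. (-1)^(?a+?b+k) * u (C!k) * (of_int s * D A V0 * D B V1 * D (dl k C) V2))"
          by (simp add: S3_cmult)
      qed
      also have "\<dots> = S3 ?a ?b (?c-1) v (\<lambda>s V0 V1 V2. \<Sum>k<?c. (-1)^(?a+?b+k) * u (C!k) * (of_int s * D A V0 * D B V1 * D (dl k C) V2))"
        by (rule S3_sum[symmetric])
      also have "\<dots> = S3 ?a ?b (?c-1) v (\<lambda>s V0 V1 V2. of_int ((-1)^(?a+?b) * s) * D A V0 * D B V1 * D C (u#V2))"
        by (simp add: sum_distrib_left sum_distrib_right power_add algebra_simps)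
      finally show ?thesis using True by simp
    qed simp
  qed
  also have "\<dots> = S3 ?a ?b ?c (u#v) (\<lambda>s V0 V1 V2. of_int s * D A V0 * D B V1 * D C V2)"
    by (simp add: S3.simps)
  finally show ?case .
qed


definition st :: "nat list \<Rightarrow> nat \<Rightarrow> nat" where "st ns k = sum_list (take k ns)"

lemma st_0[simp]: "st ns 0 = 0" by (simp add: st_def)

lemma st_Suc: "k < length ns \<Longrightarrow> st ns (Suc k) = st ns k + ns!k"
  by (simp add: st_def take_Suc_conv_app_nth)

lemma st_Cons_Suc[simp]: "st (n#ns) (Suc k) = n + st ns k"
  by (simp add: st_def)

lemma st_mono: "j \<le> j' \<Longrightarrow> st ns j \<le> st ns j'"
proof -
  assume "j \<le> j'"
  then have "take j' ns = take j ns @ take (j'-j) (drop j ns)"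
    by (metis le_add_diff_inverse take_add)
  then show ?thesis by (simp add: st_def)
qed

lemma st_le_sum: "k < length ns \<Longrightarrow> st ns k + ns!k \<le> sum_list ns"
proof -
  assume k: "k < length ns"
  have "st ns (Suc k) \<le> st ns (length ns)" using k by (intro st_mono) simp
  then have "st ns (Suc k) \<le> sum_list ns" by (simp add: st_def)
  then show ?thesis using st_Suc[OF k] by simp
qed

lemma st_upd_le: "j \<le> k \<Longrightarrow> st (ns[k:=x]) j = st ns j"
  by (simp add: st_def)

lemma st_upd_gt: "k < j \<Longrightarrow> j \<le> length ns \<Longrightarrow> st (ns[k:=x]) j + ns!k = st ns j + x"
proof (induction j)
  case 0 then show ?case by simp
next
  case (Suc j)
  then have k: "k < length ns" "j < length ns" by auto
  show ?case
  proof (cases "j = k")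
    case True
    then show ?thesis using k by (simp add: st_Suc st_upd_le)
  next
    case False
    then have "st (ns[k:=x]) j + ns!k = st ns j + x" using Suc by auto
    then show ?thesis using k False by (simp add: st_Suc)
  qed
qed

lemma blk_exists: "i < sum_list ns \<Longrightarrow> \<exists>k<length ns. st ns k \<le> i \<and> i < st ns k + ns!k"
proof (induction ns arbitrary: i)
  case Nil then show ?case by simp
next
  case (Cons n ns)
  show ?case
  proof (cases "i < n")
    case True then show ?thesis by (intro exI[of _ 0]) simp
  next
    case False
    then obtain k where "k < length ns" "st ns k \<le> i - n" "i - n < st ns k + ns!k"
      using Cons by (metis add_diff_inverse_nat add_less_cancel_left sum_list.Cons)
    then show ?thesis using False by (intro exI[of _ "Suc k"]) auto
  qed
qed

definition unsh :: "nat list \<Rightarrow> (nat \<Rightarrow> nat) set" where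
  "unsh ns = {\<sigma>. \<sigma> permutes {..<sum_list ns} \<and>
     (\<forall>k<length ns. strict_mono_on {st ns k..<st ns k + ns!k} \<sigma>)}"

definition blocks :: "(nat \<Rightarrow> nat) \<Rightarrow> nat list \<Rightarrow> 'a list \<Rightarrow> 'a list list" where
  "blocks \<sigma> ns us = map (\<lambda>k. map (\<lambda>i. us ! \<sigma> i) [st ns k..<st ns k + ns!k]) [0..<length ns]"

fun SS :: "nat list \<Rightarrow> 'a list \<Rightarrow> (int \<Rightarrow> 'a list list \<Rightarrow> 'b::comm_monoid_add) \<Rightarrow> 'b" where
  "SS ns [] F = (if (\<forall>n\<in>set ns. n = 0) then F 1 (replicate (length ns) []) else 0)"
| "SS ns (u#w) F = (\<Sum>k<length ns. if 0 < ns!k then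
      SS (ns[k := ns!k - 1]) w (\<lambda>s Vs. F ((-1)^(st ns k) * s) (Vs[k := u # Vs!k])) else 0)"

definition lift :: "(nat \<Rightarrow> nat) \<Rightarrow> nat \<Rightarrow> nat" where
  "lift \<tau> i = (case i of 0 \<Rightarrow> 0 | Suc j \<Rightarrow> Suc (\<tau> j))"

definition cyc :: "nat \<Rightarrow> nat \<Rightarrow> nat" where
  "cyc m i = (if i < m then Suc i else if i = m then 0 else i)"

definition ins :: "nat \<Rightarrow> (nat \<Rightarrow> nat) \<Rightarrow> nat \<Rightarrow> nat" where
  "ins m \<tau> i = (if i < m then Suc (\<tau> i) else if i = m then 0 else Suc (\<tau> (i - 1)))"

definition rem :: "nat \<Rightarrow> (nat \<Rightarrow> nat) \<Rightarrow> nat \<Rightarrow> nat" where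
  "rem m \<sigma> j = (if j < m then \<sigma> j - 1 else \<sigma> (Suc j) - 1)"

lemma lift_map_perm: "\<tau> permutes {..<N} \<Longrightarrow> lift \<tau> = map_permutation {..<N} Suc \<tau>"
proof (rule ext)
  fix x assume t: "\<tau> permutes {..<N}"
  show "lift \<tau> x = map_permutation {..<N} Suc \<tau> x"
  proof (cases x)
    case 0 then show ?thesis by (auto simp: lift_def map_permutation_def restrict_id_def)
  next
    case (Suc j)
    show ?thesis
    proof (cases "j < N")
      case True
      have "inv_into {..<N} Suc (Suc j) = j" using True by (intro inv_into_f_eq) auto
      then show ?thesis using Suc True by (auto simp: lift_def map_permutation_def restrict_id_def)
    next
      case False
      then have "\<tau> j = j" using t by (simp add: permutes_not_in)
      then show ?thesis using Suc False by (auto simp: lift_def map_permutation_def restrict_id_def)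
    qed
  qed
qed

lemma lift_permutes: "\<tau> permutes {..<N} \<Longrightarrow> lift \<tau> permutes {..<Suc N}"
proof -
  assume t: "\<tau> permutes {..<N}"
  have "map_permutation {..<N} Suc \<tau> permutes (Suc ` {..<N})"
    by (rule map_permutation_permutes[OF _ t]) (simp add: bij_betw_def)
  then have "map_permutation {..<N} Suc \<tau> permutes {..<Suc N}"
    by (rule permutes_subset) auto
  then show ?thesis using lift_map_perm[OF t] by simp
qed

lemma sign_lift: "\<tau> permutes {..<N} \<Longrightarrow> sign (lift \<tau>) = sign \<tau>"
  by (simp add: lift_map_perm sign_map_permutation)

lemma cyc_Suc: "cyc (Suc m) = cyc m \<circ> Transposition.transpose m (Suc m)"
  by (rule ext) (auto simp: cyc_def Transposition.transpose_def)

lemma cyc_permutes: "cyc m permutes {..m}"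
proof (induction m)
  case 0
  have "cyc 0 = id" by (rule ext) (simp add: cyc_def)
  then show ?case by (metis permutes_id)
next
  case (Suc m)
  have "cyc m permutes {..Suc m}" by (rule permutes_subset[OF Suc]) auto
  moreover have "Transposition.transpose m (Suc m) permutes {..Suc m}"
    by (rule permutes_swap_id) auto
  ultimately show ?case unfolding cyc_Suc by (rule permutes_compose[rotated])
qed

lemma sign_cyc: "sign (cyc m) = (-1)^m"
proof (induction m)
  case 0
  have "cyc 0 = id" by (rule ext) (simp add: cyc_def)
  then show ?case by (metis sign_id power_0)
next
  case (Suc m)
  have p1: "permutation (cyc m)" using cyc_permutes by (rule permutes_imp_permutation[rotated]) simp
  have p2: "permutation (Transposition.transpose m (Suc m))" by (rule permutation_swap_id)
  show ?case unfolding cyc_Suc sign_compose[OF p1 p2] Suc sign_swap_id by simp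
qed

lemma ins_eq: "ins m \<tau> = lift \<tau> \<circ> cyc m"
  by (rule ext) (auto simp: ins_def lift_def cyc_def split: nat.splits)

lemma ins_permutes: "\<tau> permutes {..<N} \<Longrightarrow> m \<le> N \<Longrightarrow> ins m \<tau> permutes {..<Suc N}"
proof -
  assume t: "\<tau> permutes {..<N}" and m: "m \<le> N"
  have "cyc m permutes {..<Suc N}" by (rule permutes_subset[OF cyc_permutes]) (use m in auto)
  then show ?thesis unfolding ins_eq by (rule permutes_compose) (rule lift_permutes[OF t])
qed

lemma sign_ins: "\<tau> permutes {..<N} \<Longrightarrow> m \<le> N \<Longrightarrow> sign (ins m \<tau>) = (-1)^m * sign \<tau>"
proof -
  assume t: "\<tau> permutes {..<N}" and m: "m \<le> N"
  have p1: "permutation (lift \<tau>)" by (rule permutes_imp_permutation[OF _ lift_permutes[OF t]]) simp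
  have p2: "permutation (cyc m)" using cyc_permutes by (rule permutes_imp_permutation[rotated]) simp
  show ?thesis unfolding ins_eq sign_compose[OF p1 p2] sign_lift[OF t] sign_cyc by simp
qed

lemma rem_ins: "rem m (ins m \<tau>) = \<tau>"
  by (rule ext) (simp add: rem_def ins_def)

lemma perm_nz: "\<sigma> permutes S \<Longrightarrow> \<sigma> m = 0 \<Longrightarrow> i \<noteq> m \<Longrightarrow> \<sigma> i \<noteq> 0"
  by (metis permutes_inj injD)

lemma ins_rem: "\<sigma> permutes S \<Longrightarrow> \<sigma> m = 0 \<Longrightarrow> ins m (rem m \<sigma>) = \<sigma>"
proof (rule ext)
  fix i assume s: "\<sigma> permutes S" "\<sigma> m = 0"
  show "ins m (rem m \<sigma>) i = \<sigma> i"
    using perm_nz[OF s, of i] s by (auto simp: ins_def rem_def)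
qed

lemma rem_permutes:
  assumes s: "\<sigma> permutes {..<Suc N}" "\<sigma> m = 0" and m: "m \<le> N"
  shows "rem m \<sigma> permutes {..<N}"
proof (rule bij_imp_permutes)
  define pos where "pos j = (if j < m then j else Suc j)" for j
  have rp: "rem m \<sigma> j = \<sigma> (pos j) - 1" for j by (simp add: rem_def pos_def)
  have nz: "\<sigma> (pos j) \<noteq> 0" for j by (rule perm_nz[OF s]) (simp add: pos_def)
  have inj: "inj_on (rem m \<sigma>) {..<N}"
  proof (rule inj_onI)
    fix x y assume "rem m \<sigma> x = rem m \<sigma> y"
    then have "\<sigma> (pos x) = \<sigma> (pos y)" using nz[of x] nz[of y] by (simp add: rp)
    then have "pos x = pos y" using permutes_inj[OF s(1)] by (simp add: inj_eq)
    then show "x = y" by (auto simp: pos_def split: if_splits)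
  qed
  have im: "rem m \<sigma> ` {..<N} \<subseteq> {..<N}"
  proof
    fix y assume "y \<in> rem m \<sigma> ` {..<N}"
    then obtain x where x: "x < N" "y = rem m \<sigma> x" by auto
    have "pos x < Suc N" using x by (simp add: pos_def)
    then have "\<sigma> (pos x) < Suc N" using permutes_in_image[OF s(1)] by simp
    then show "y \<in> {..<N}" using x nz[of x] by (simp add: rp)
  qed
  show "bij_betw (rem m \<sigma>) {..<N} {..<N}"
    unfolding bij_betw_def using inj endo_inj_surj[OF _ im inj] by simp
  fix x assume "x \<notin> {..<N}"
  then have "\<sigma> (Suc x) = Suc x" using s(1) by (simp add: permutes_not_in)
  then show "rem m \<sigma> x = x" using \<open>x \<notin> {..<N}\<close> m by (simp add: rem_def)
qed


lemma smo_suc: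
  assumes "\<And>x. x \<in> A \<Longrightarrow> f x = Suc (g x)"
  shows "strict_mono_on A f \<longleftrightarrow> strict_mono_on A g"
  using assms unfolding strict_mono_on_def by auto

lemma smo_shift:
  assumes "\<And>x. a \<le> x \<Longrightarrow> x < b \<Longrightarrow> f (Suc x) = Suc (g x)"
  shows "strict_mono_on {Suc a..<Suc b} f \<longleftrightarrow> strict_mono_on {a..<b} g"
proof
  assume h: "strict_mono_on {Suc a..<Suc b} f"
  show "strict_mono_on {a..<b} g"
  proof (rule strict_mono_onI)
    fix x y assume "x \<in> {a..<b}" "y \<in> {a..<b}" "x < y"
    then have "f (Suc x) < f (Suc y)" by (intro strict_mono_onD[OF h]) auto
    then show "g x < g y" using assms \<open>x \<in> _\<close> \<open>y \<in> _\<close> by auto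
  qed
next
  assume h: "strict_mono_on {a..<b} g"
  show "strict_mono_on {Suc a..<Suc b} f"
  proof (rule strict_mono_onI)
    fix x y assume x: "x \<in> {Suc a..<Suc b}" and y: "y \<in> {Suc a..<Suc b}" and "x < y"
    then obtain x' y' where "x = Suc x'" "y = Suc y'" by (metis atLeastLessThan_iff not0_implies_Suc not_less0 zero_less_Suc less_le_trans Suc_le_eq)
    moreover have "g x' < g y'" using \<open>x = Suc x'\<close> \<open>y = Suc y'\<close> x y \<open>x < y\<close>
      by (intro strict_mono_onD[OF h]) auto
    ultimately show "f x < f y" using assms x y by auto
  qed
qed

lemma smo_first:
  assumes "f m = 0" "\<And>x. m \<le> x \<Longrightarrow> x < m + n - 1 \<Longrightarrow> f (Suc x) = Suc (g x)" "0 < n"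
  shows "strict_mono_on {m..<m+n} f \<longleftrightarrow> strict_mono_on {m..<m+n-1} g"
proof -
  have e: "{m..<m+n} = insert m {Suc m..<Suc (m+n-1)}" using assms(3) by auto
  have "strict_mono_on {Suc m..<Suc (m+n-1)} f \<longleftrightarrow> strict_mono_on {m..<m+n-1} g"
    by (rule smo_shift) (use assms(2) in auto)
  moreover have "strict_mono_on (insert m {Suc m..<Suc (m+n-1)}) f \<longleftrightarrow> strict_mono_on {Suc m..<Suc (m+n-1)} f"
  proof
    assume "strict_mono_on (insert m {Suc m..<Suc (m+n-1)}) f"
    then show "strict_mono_on {Suc m..<Suc (m+n-1)} f" by (auto simp: strict_mono_on_def)
  next
    assume h: "strict_mono_on {Suc m..<Suc (m+n-1)} f"
    show "strict_mono_on (insert m {Suc m..<Suc (m+n-1)}) f"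
    proof (rule strict_mono_onI)
      fix x y assume x: "x \<in> insert m {Suc m..<Suc (m+n-1)}" and y: "y \<in> insert m {Suc m..<Suc (m+n-1)}" and xy: "x < y"
      show "f x < f y"
      proof (cases "x = m")
        case True
        then have "y \<in> {Suc m..<Suc (m+n-1)}" using y xy by auto
        then obtain y' where "y = Suc y'" "m \<le> y'" "y' < m+n-1" by (cases y) auto
        then show ?thesis using True assms by simp
      next
        case False
        then show ?thesis using x y xy by (intro strict_mono_onD[OF h]) auto
      qed
    qed
  qed
  ultimately show ?thesis unfolding e by simp
qed

lemma sum_upd: fixes ns :: "nat list" shows "k < length ns \<Longrightarrow> sum_list (ns[k:=x]) + ns!k = sum_list ns + x"
  using st_upd_gt[of k "length ns" ns x] by (simp add: st_def)

lemma unsh_ins: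
  assumes k: "k < length ns" "0 < ns!k"
    and t: "\<tau> permutes {..<sum_list (ns[k:=ns!k-1])}"
  shows "ins (st ns k) \<tau> \<in> unsh ns \<longleftrightarrow> \<tau> \<in> unsh (ns[k:=ns!k-1])"
proof -
  let ?m = "st ns k" and ?ns' = "ns[k:=ns!k-1]"
  define N where "N = sum_list ?ns'"
  have sN: "sum_list ns = Suc N" using sum_upd[OF k(1), of "ns!k-1"] k(2) by (simp add: N_def)
  have mk: "?m + ns!k \<le> Suc N" using st_le_sum[OF k(1)] sN by simp
  have perm: "ins ?m \<tau> permutes {..<sum_list ns}"
    unfolding sN by (rule ins_permutes[OF t[folded N_def]]) (use mk k in simp)
  have blk: "strict_mono_on {st ns j..<st ns j + ns!j} (ins ?m \<tau>) \<longleftrightarrow>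
             strict_mono_on {st ?ns' j..<st ?ns' j + ?ns'!j} \<tau>" if j: "j < length ns" for j
  proof -
    consider "j < k" | "j = k" | "k < j" by linarith
    then show ?thesis
    proof cases
      case 1
      have le: "st ns j + ns!j \<le> ?m" using st_mono[of "Suc j" k ns] st_Suc[OF j] 1 by simp
      have "st ?ns' j = st ns j" using 1 by (simp add: st_upd_le)
      moreover have "?ns'!j = ns!j" using 1 by simp
      moreover have "strict_mono_on {st ns j..<st ns j + ns!j} (ins ?m \<tau>) \<longleftrightarrow>
             strict_mono_on {st ns j..<st ns j + ns!j} \<tau>"
        by (rule smo_suc) (use le in \<open>auto simp: ins_def\<close>)
      ultimately show ?thesis by simp
    next
      case 2
      have "st ?ns' j = ?m" using 2 by (simp add: st_upd_le)
      moreover have "?ns'!j = ns!k - 1" using 2 k by simp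
      moreover have "strict_mono_on {?m..<?m + ns!k} (ins ?m \<tau>) \<longleftrightarrow>
             strict_mono_on {?m..<?m + ns!k - 1} \<tau>"
        by (rule smo_first) (use k in \<open>auto simp: ins_def\<close>)
      ultimately show ?thesis using 2 k by (simp add: add.commute)
    next
      case 3
      have ge: "?m + ns!k \<le> st ns j" using st_mono[of "Suc k" j ns] st_Suc[OF k(1)] 3 by simp
      have e: "st ?ns' j + ns!k = st ns j + (ns!k - 1)" using st_upd_gt[of k j ns] 3 j by simp
      then have e': "st ns j = Suc (st ?ns' j)" using k(2) by simp
      moreover have "?ns'!j = ns!j" using 3 by simp
      moreover have "strict_mono_on {Suc (st ?ns' j)..<Suc (st ?ns' j + ns!j)} (ins ?m \<tau>) \<longleftrightarrow>
             strict_mono_on {st ?ns' j..<st ?ns' j + ns!j} \<tau>"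
        by (rule smo_shift) (use ge e' k(2) in \<open>auto simp: ins_def\<close>)
      ultimately show ?thesis by simp
    qed
  qed
  show ?thesis using perm t blk by (auto simp: unsh_def)
qed

lemma blocks_ins:
  assumes k: "k < length ns" "0 < ns!k"
  shows "blocks (ins (st ns k) \<tau>) ns (u#us) =
     (blocks \<tau> (ns[k:=ns!k-1]) us)[k := u # (blocks \<tau> (ns[k:=ns!k-1]) us)!k]"
proof (rule nth_equalityI)
  let ?m = "st ns k" and ?ns' = "ns[k:=ns!k-1]"
  show "length (blocks (ins ?m \<tau>) ns (u#us)) = length ((blocks \<tau> ?ns' us)[k := u # (blocks \<tau> ?ns' us)!k])"
    by (simp add: blocks_def)
  fix j assume "j < length (blocks (ins ?m \<tau>) ns (u#us))"
  then have j: "j < length ns" by (simp add: blocks_def)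
  have lhs: "blocks (ins ?m \<tau>) ns (u#us) ! j = map (\<lambda>i. (u#us) ! ins ?m \<tau> i) [st ns j..<st ns j + ns!j]"
    using j by (simp add: blocks_def)
  consider "j < k" | "j = k" | "k < j" by linarith
  then show "blocks (ins ?m \<tau>) ns (u#us) ! j = ((blocks \<tau> ?ns' us)[k := u # (blocks \<tau> ?ns' us)!k]) ! j"
  proof cases
    case 1
    have le: "st ns j + ns!j \<le> ?m" using st_mono[of "Suc j" k ns] st_Suc[OF j] 1 by simp
    have rhs: "((blocks \<tau> ?ns' us)[k := u # (blocks \<tau> ?ns' us)!k]) ! j = map (\<lambda>i. us ! \<tau> i) [st ns j..<st ns j + ns!j]"
      using 1 j by (simp add: blocks_def st_upd_le)
    show ?thesis unfolding lhs rhs using le by (intro map_cong refl) (auto simp: ins_def)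
  next
    case 2
    have rhs: "((blocks \<tau> ?ns' us)[k := u # (blocks \<tau> ?ns' us)!k]) ! j = u # map (\<lambda>i. us ! \<tau> i) [?m..<?m + (ns!k - 1)]"
      using 2 j by (simp add: blocks_def st_upd_le)
    have ups: "[?m..<?m + ns!k] = ?m # map Suc [?m..<?m + (ns!k - 1)]"
      using k(2) by (simp add: map_Suc_upt upt_conv_Cons)
    show ?thesis using lhs rhs unfolding 2 ups by (auto simp: ins_def)
  next
    case 3
    have e: "st ?ns' j + ns!k = st ns j + (ns!k - 1)" using st_upd_gt[of k j ns] 3 j by simp
    then have e': "st ns j = Suc (st ?ns' j)" using k(2) by simp
    have rhs: "((blocks \<tau> ?ns' us)[k := u # (blocks \<tau> ?ns' us)!k]) ! j = map (\<lambda>i. us ! \<tau> i) [st ?ns' j..<st ?ns' j + ns!j]"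
      using 3 j by (simp add: blocks_def)
    have ups: "[st ns j..<st ns j + ns!j] = map Suc [st ?ns' j..<st ?ns' j + ns!j]"
      unfolding e' by (simp add: map_Suc_upt)
    have ge: "?m < st ns j" using st_mono[of "Suc k" j ns] st_Suc[OF k(1)] 3 k(2) by simp
    show ?thesis unfolding lhs rhs ups using ge e' by (auto simp: ins_def)
  qed
qed


lemma finite_unsh: "finite (unsh ns)"
proof -
  have "unsh ns \<subseteq> {\<sigma>. \<sigma> permutes {..<sum_list ns}}" by (auto simp: unsh_def)
  then show ?thesis by (rule finite_subset) (simp add: finite_permutations)
qed

lemma st_inj:
  assumes "k1 < length ns" "k2 < length ns" "0 < ns!k1" "0 < ns!k2" "st ns k1 = st ns k2"
  shows "k1 = k2"
proof (rule ccontr)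
  assume "k1 \<noteq> k2"
  then consider "k1 < k2" | "k2 < k1" by linarith
  then show False
  proof cases
    case 1
    have "st ns (Suc k1) \<le> st ns k2" using 1 by (intro st_mono) simp
    then show False using st_Suc[OF assms(1)] assms by simp
  next
    case 2
    have "st ns (Suc k2) \<le> st ns k1" using 2 by (intro st_mono) simp
    then show False using st_Suc[OF assms(2)] assms by simp
  qed
qed

lemma unsh_zero:
  assumes s: "\<sigma> \<in> unsh ns" and sN: "sum_list ns = Suc N"
  shows "\<exists>k<length ns. 0 < ns!k \<and> \<sigma> (st ns k) = 0"
proof -
  have p: "\<sigma> permutes {..<Suc N}" using s sN by (simp add: unsh_def)
  obtain i where i: "i < Suc N" "\<sigma> i = 0"
    using permutes_surj[OF p] permutes_in_image[OF p]
    by (metis lessThan_iff permutes_inverses(1)[OF p] permutes_inv[OF p] zero_less_Suc)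
  obtain k where k: "k < length ns" "st ns k \<le> i" "i < st ns k + ns!k"
    using blk_exists[of i ns] i sN by auto
  have "i = st ns k"
  proof (rule ccontr)
    assume "i \<noteq> st ns k"
    then have "\<sigma> (st ns k) < \<sigma> i"
      using k s by (intro strict_mono_onD[of "{st ns k..<st ns k + ns!k}" \<sigma>]) (auto simp: unsh_def)
    then show False using i by simp
  qed
  then show ?thesis using k i by (intro exI[of _ k]) auto
qed

lemma A1:
  fixes us :: "'a list" and F :: "int \<Rightarrow> 'a list list \<Rightarrow> 'b::comm_monoid_add"
  shows "length us = sum_list ns \<Longrightarrow>
   (\<Sum>\<sigma>\<in>unsh ns. F (sign \<sigma>) (blocks \<sigma> ns us)) = SS ns us F"
proof (induction us arbitrary: ns F)
  case Nil
  then have z: "\<forall>n\<in>set ns. n = 0" by simp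
  then have nz: "ns!k = 0" if "k < length ns" for k using that by auto
  have s0: "sum_list ns = 0" using Nil by simp
  have u: "unsh ns = {id}" by (auto simp: unsh_def nz s0)
  have bl: "blocks id ns ([]::'a list) = replicate (length ns) []"
    by (rule nth_equalityI) (auto simp: blocks_def nz)
  have "(\<Sum>\<sigma>\<in>unsh ns. F (sign \<sigma>) (blocks \<sigma> ns ([]::'a list))) = F (sign (id::nat\<Rightarrow>nat)) (blocks id ns [])"
    unfolding u by (simp only: sum.empty sum.insert finite.emptyI empty_iff not_False_eq_True add_0_right)
  also have "\<dots> = F 1 (replicate (length ns) [])" by (simp only: bl sign_id)
  finally show ?case using z by simp
next
  case (Cons u us)
  define N where "N = length us"
  have sN: "sum_list ns = Suc N" using Cons.prems by (simp add: N_def)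
  define K where "K = {k. k < length ns \<and> 0 < ns!k}"
  define Sk where "Sk k = {\<sigma>\<in>unsh ns. \<sigma> (st ns k) = 0}" for k
  define g where "g \<sigma> = F (sign \<sigma>) (blocks \<sigma> ns (u#us))" for \<sigma>
  have finK: "finite K" by (simp add: K_def)
  have U: "unsh ns = (\<Union>k\<in>K. Sk k)"
  proof (intro equalityI subsetI)
    fix \<sigma> assume s: "\<sigma> \<in> unsh ns"
    obtain k where "k<length ns" "0 < ns!k" "\<sigma> (st ns k) = 0" using unsh_zero[OF s sN] by blast
    then show "\<sigma> \<in> (\<Union>k\<in>K. Sk k)" using s unfolding K_def Sk_def by blast
  next
    fix \<sigma> assume "\<sigma> \<in> (\<Union>k\<in>K. Sk k)"
    then show "\<sigma> \<in> unsh ns" unfolding Sk_def by blast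
  qed
  have disj: "\<forall>i\<in>K. \<forall>j\<in>K. i \<noteq> j \<longrightarrow> Sk i \<inter> Sk j = {}"
  proof (intro ballI impI)
    fix i j assume i: "i \<in> K" and j: "j \<in> K" and ij: "i \<noteq> j"
    show "Sk i \<inter> Sk j = {}"
    proof (rule ccontr)
      assume "Sk i \<inter> Sk j \<noteq> {}"
      then obtain \<sigma> where s: "\<sigma> \<in> unsh ns" "\<sigma> (st ns i) = 0" "\<sigma> (st ns j) = 0" unfolding Sk_def by blast
      then have "inj \<sigma>" by (auto simp: unsh_def dest: permutes_inj)
      then have "st ns i = st ns j" using s by (metis injD)
      then show False using st_inj[of i ns j] i j ij unfolding K_def by auto
    qed
  qed
  have finS: "\<forall>k\<in>K. finite (Sk k)"
    unfolding Sk_def by (auto intro: finite_subset[OF _ finite_unsh])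
  have "(\<Sum>\<sigma>\<in>unsh ns. g \<sigma>) = (\<Sum>k\<in>K. \<Sum>\<sigma>\<in>Sk k. g \<sigma>)"
    unfolding U by (rule sum.UNION_disjoint[OF finK finS disj])
  also have "\<dots> = (\<Sum>k\<in>K. SS (ns[k := ns!k - 1]) us (\<lambda>s Vs. F ((-1)^(st ns k) * s) (Vs[k := u # Vs!k])))"
  proof (rule sum.cong[OF refl])
    fix k assume kK: "k \<in> K"
    then have k: "k < length ns" "0 < ns!k" by (auto simp: K_def)
    let ?m = "st ns k" and ?ns' = "ns[k := ns!k - 1]"
    have sN': "sum_list ?ns' = N" using sum_upd[OF k(1), of "ns!k - 1"] sN k(2) by simp
    have mN: "?m \<le> N" using st_le_sum[OF k(1)] sN k(2) by simp
    have "(\<Sum>\<sigma>\<in>Sk k. g \<sigma>) = (\<Sum>\<tau>\<in>unsh ?ns'. g (ins ?m \<tau>))"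
    proof (rule sum.reindex_bij_witness[of _ "ins ?m" "rem ?m"])
      fix \<sigma> assume "\<sigma> \<in> Sk k"
      then have s: "\<sigma> \<in> unsh ns" "\<sigma> ?m = 0" by (auto simp: Sk_def)
      then have p: "\<sigma> permutes {..<Suc N}" using sN by (simp add: unsh_def)
      show ins_r: "ins ?m (rem ?m \<sigma>) = \<sigma>" by (rule ins_rem[OF p s(2)])
      have pr: "rem ?m \<sigma> permutes {..<sum_list ?ns'}" unfolding sN' by (rule rem_permutes[OF p s(2) mN])
      show "rem ?m \<sigma> \<in> unsh ?ns'" using unsh_ins[OF k pr] ins_r s(1) by simp
      show "g (ins ?m (rem ?m \<sigma>)) = g \<sigma>" using ins_r by simp
    next
      fix \<tau> assume t: "\<tau> \<in> unsh ?ns'"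
      show "rem ?m (ins ?m \<tau>) = \<tau>" by (rule rem_ins)
      have pt: "\<tau> permutes {..<sum_list ?ns'}" using t by (simp add: unsh_def)
      show "ins ?m \<tau> \<in> Sk k" using unsh_ins[OF k pt] t by (simp add: Sk_def ins_def)
    qed
    also have "\<dots> = (\<Sum>\<tau>\<in>unsh ?ns'. F ((-1)^?m * sign \<tau>) ((blocks \<tau> ?ns' us)[k := u # (blocks \<tau> ?ns' us)!k]))"
    proof (rule sum.cong[OF refl])
      fix \<tau> assume t: "\<tau> \<in> unsh ?ns'"
      have pt: "\<tau> permutes {..<N}" using t sN' by (simp add: unsh_def)
      show "g (ins ?m \<tau>) = F ((-1)^?m * sign \<tau>) ((blocks \<tau> ?ns' us)[k := u # (blocks \<tau> ?ns' us)!k])"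
        unfolding g_def sign_ins[OF pt mN] blocks_ins[OF k] ..
    qed
    also have "\<dots> = SS ?ns' us (\<lambda>s Vs. F ((-1)^?m * s) (Vs[k := u # Vs!k]))"
      by (rule Cons.IH) (metis sN' N_def)
    finally show "(\<Sum>\<sigma>\<in>Sk k. g \<sigma>) = SS ?ns' us (\<lambda>s Vs. F ((-1)^?m * s) (Vs[k := u # Vs!k]))" .
  qed
  also have "\<dots> = SS ns (u#us) F"
  proof -
    have "K = {k \<in> {..<length ns}. 0 < ns!k}" by (auto simp: K_def)
    then show ?thesis unfolding SS.simps by (simp only: sum.inter_filter[OF finite_lessThan])
  qed
  finally show ?case by (simp add: g_def)
qed


lemma SS_2: "SS [a,b] w F = S2 a b w (\<lambda>s A B. F s [A,B])"
proof (induction w arbitrary: a b F)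
  case Nil then show ?case by (simp add: S2.simps)
next
  case (Cons u w)
  show ?case by (simp add: S2.simps numeral_2_eq_2 lessThan_Suc st_def Cons.IH)
qed

lemma SS_3: "SS [a,b,c] w F = S3 a b c w (\<lambda>s A B C. F s [A,B,C])"
proof (induction w arbitrary: a b c F)
  case Nil then show ?case by (simp add: S3.simps)
next
  case (Cons u w)
  show ?case by (simp add: S3.simps numeral_3_eq_3 lessThan_Suc st_def Cons.IH add.commute)
qed

lemma unsh2: "unshuffle2 a b = unsh [a,b]"
  by (auto simp: unshuffle2_def unsh_def numeral_2_eq_2 less_Suc_eq st_def atLeast0LessThan)

lemma unsh3: "unshuffle3 a b c = unsh [a,b,c]"
  by (auto simp: unshuffle3_def unsh_def numeral_3_eq_3 less_Suc_eq st_def atLeast0LessThan add.assoc)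

lemma blocks2: "blocks \<sigma> [a,b] us = [map (\<lambda>i. us ! \<sigma> i) [0..<a], map (\<lambda>i. us ! \<sigma> i) [a..<a+b]]"
  by (simp add: blocks_def numeral_2_eq_2 st_def upt_rec)

lemma blocks3: "blocks \<sigma> [a,b,c] us = [map (\<lambda>i. us ! \<sigma> i) [0..<a], map (\<lambda>i. us ! \<sigma> i) [a..<a+b],
   map (\<lambda>i. us ! \<sigma> i) [a+b..<a+b+c]]"
  by (simp add: blocks_def numeral_3_eq_3 st_def upt_rec)

lemma sum_unsh2:
  fixes F :: "int \<Rightarrow> 'a list \<Rightarrow> 'a list \<Rightarrow> 'b::ab_group_add"
  assumes "length us = a + b"
  shows "(\<Sum>\<sigma>\<in>unshuffle2 a b. F (sign \<sigma>) (map (\<lambda>i. us ! \<sigma> i) [0..<a]) (map (\<lambda>i. us ! \<sigma> i) [a..<a+b]))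
    = S2 a b us F"
proof -
  have "(\<Sum>\<sigma>\<in>unshuffle2 a b. F (sign \<sigma>) (map (\<lambda>i. us ! \<sigma> i) [0..<a]) (map (\<lambda>i. us ! \<sigma> i) [a..<a+b]))
     = (\<Sum>\<sigma>\<in>unsh [a,b]. (\<lambda>s Vs. F s (Vs!0) (Vs!1)) (sign \<sigma>) (blocks \<sigma> [a,b] us))"
    unfolding unsh2 blocks2 by simp
  also have "\<dots> = SS [a,b] us (\<lambda>s Vs. F s (Vs!0) (Vs!1))"
    by (rule A1) (use assms in simp)
  also have "\<dots> = S2 a b us F" by (simp add: SS_2)
  finally show ?thesis .
qed

lemma sum_unsh3:
  fixes F :: "int \<Rightarrow> 'a list \<Rightarrow> 'a list \<Rightarrow> 'a list \<Rightarrow> 'b::ab_group_add"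
  assumes "length us = a + b + c"
  shows "(\<Sum>\<sigma>\<in>unshuffle3 a b c. F (sign \<sigma>) (map (\<lambda>i. us ! \<sigma> i) [0..<a]) (map (\<lambda>i. us ! \<sigma> i) [a..<a+b])
       (map (\<lambda>i. us ! \<sigma> i) [a+b..<a+b+c]))
    = S3 a b c us F"
proof -
  have "(\<Sum>\<sigma>\<in>unshuffle3 a b c. F (sign \<sigma>) (map (\<lambda>i. us ! \<sigma> i) [0..<a]) (map (\<lambda>i. us ! \<sigma> i) [a..<a+b])
       (map (\<lambda>i. us ! \<sigma> i) [a+b..<a+b+c]))
     = (\<Sum>\<sigma>\<in>unsh [a,b,c]. (\<lambda>s Vs. F s (Vs!0) (Vs!1) (Vs!2)) (sign \<sigma>) (blocks \<sigma> [a,b,c] us))"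
    unfolding unsh3 blocks3 by simp
  also have "\<dots> = SS [a,b,c] us (\<lambda>s Vs. F s (Vs!0) (Vs!1) (Vs!2))"
    by (rule A1) (use assms in simp)
  also have "\<dots> = S3 a b c us F" by (simp add: SS_3)
  finally show ?thesis .
qed

lemma hbr_S:
  assumes "length us = m + n"
  shows "hbr scale br n m P Q us =
    (if n = 0 then 0 else S3 m 1 (n-1) us (\<lambda>s A V B. scale (of_int s) (P (ad_star br (Q A) (hd V) # B))))
  - scale ((-1)^(m*n)) (if m = 0 then 0 else S3 n 1 (m-1) us (\<lambda>s A V B. scale (of_int s) (Q (ad_star br (P A) (hd V) # B))))
  + scale ((-1)^(m*n)) (S2 n m us (\<lambda>s A B. scale (of_int s) (br (P A) (Q B))))"
proof -
  have t1: "(\<Sum>\<sigma>\<in>unshuffle3 m 1 (n - 1). scale (of_int (sign \<sigma>))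
        (P (ad_star br (Q (map (\<lambda>i. us ! \<sigma> i) [0..<m])) (us ! \<sigma> m) # map (\<lambda>i. us ! \<sigma> i) [m+1..<m+n])))
     = S3 m 1 (n-1) us (\<lambda>s A V B. scale (of_int s) (P (ad_star br (Q A) (hd V) # B)))" if n: "0 < n"
  proof -
    have "(\<Sum>\<sigma>\<in>unshuffle3 m 1 (n - 1). scale (of_int (sign \<sigma>))
        (P (ad_star br (Q (map (\<lambda>i. us ! \<sigma> i) [0..<m])) (us ! \<sigma> m) # map (\<lambda>i. us ! \<sigma> i) [m+1..<m+n])))
      = (\<Sum>\<sigma>\<in>unshuffle3 m 1 (n - 1). (\<lambda>s A V B. scale (of_int s) (P (ad_star br (Q A) (hd V) # B)))
          (sign \<sigma>) (map (\<lambda>i. us ! \<sigma> i) [0..<m]) (map (\<lambda>i. us ! \<sigma> i) [m..<m+1])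
          (map (\<lambda>i. us ! \<sigma> i) [m+1..<m+1+(n-1)]))"
      using n by simp
    also have "\<dots> = S3 m 1 (n-1) us (\<lambda>s A V B. scale (of_int s) (P (ad_star br (Q A) (hd V) # B)))"
      by (rule sum_unsh3) (use assms n in simp)
    finally show ?thesis .
  qed
  have t2: "(\<Sum>\<sigma>\<in>unshuffle3 n 1 (m - 1). scale (of_int (sign \<sigma>))
        (Q (ad_star br (P (map (\<lambda>i. us ! \<sigma> i) [0..<n])) (us ! \<sigma> n) # map (\<lambda>i. us ! \<sigma> i) [n+1..<m+n])))
     = S3 n 1 (m-1) us (\<lambda>s A V B. scale (of_int s) (Q (ad_star br (P A) (hd V) # B)))" if m: "0 < m"
  proof -
    have "(\<Sum>\<sigma>\<in>unshuffle3 n 1 (m - 1). scale (of_int (sign \<sigma>))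
        (Q (ad_star br (P (map (\<lambda>i. us ! \<sigma> i) [0..<n])) (us ! \<sigma> n) # map (\<lambda>i. us ! \<sigma> i) [n+1..<m+n])))
      = (\<Sum>\<sigma>\<in>unshuffle3 n 1 (m - 1). (\<lambda>s A V B. scale (of_int s) (Q (ad_star br (P A) (hd V) # B)))
          (sign \<sigma>) (map (\<lambda>i. us ! \<sigma> i) [0..<n]) (map (\<lambda>i. us ! \<sigma> i) [n..<n+1])
          (map (\<lambda>i. us ! \<sigma> i) [n+1..<n+1+(m-1)]))"
      using m by (simp add: add.commute)
    also have "\<dots> = S3 n 1 (m-1) us (\<lambda>s A V B. scale (of_int s) (Q (ad_star br (P A) (hd V) # B)))"
      by (rule sum_unsh3) (use assms m in simp)
    finally show ?thesis .
  qed
  have t3: "(\<Sum>\<sigma>\<in>unshuffle2 n m. scale (of_int (sign \<sigma>))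
        (br (P (map (\<lambda>i. us ! \<sigma> i) [0..<n])) (Q (map (\<lambda>i. us ! \<sigma> i) [n..<n+m]))))
     = S2 n m us (\<lambda>s A B. scale (of_int s) (br (P A) (Q B)))"
    by (rule sum_unsh2[where F="\<lambda>s A B. scale (of_int s) (br (P A) (Q B))"]) (use assms in simp)
  show ?thesis
    unfolding hbr_def Let_def
    using t1 t2 t3 by (cases "n = 0"; cases "m = 0") auto
qed


locale LA =
  fixes scale :: "'k::field \<Rightarrow> 'g::ab_group_add \<Rightarrow> 'g" and br :: "'g \<Rightarrow> 'g \<Rightarrow> 'g"
  assumes lie: "lie_algebra scale br"
begin

lemma VS: "vector_space scale" using lie by (simp add: lie_algebra_def)

sublocale vector_space scale by (rule VS)

lemma br_lin2: "Vector_Spaces.linear scale scale (br x)" using lie by (simp add: lie_algebra_def)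
lemma br_lin1: "Vector_Spaces.linear scale scale (\<lambda>x. br x y)" using lie by (simp add: lie_algebra_def)

lemma br_add1: "br (x + y) z = br x z + br y z"
  using br_lin1[of z] unfolding Vector_Spaces.linear_iff by blast
lemma br_add2: "br z (x + y) = br z x + br z y"
  using br_lin2[of z] unfolding Vector_Spaces.linear_iff by blast
lemma br_scale1: "br (scale c x) y = scale c (br x y)"
  using br_lin1[of y] unfolding Vector_Spaces.linear_iff by blast
lemma br_scale2: "br y (scale c x) = scale c (br y x)"
  using br_lin2[of y] unfolding Vector_Spaces.linear_iff by blast
lemma br_sum1: "br (\<Sum>i\<in>I. f i) y = (\<Sum>i\<in>I. br (f i) y)"
  using module_hom.sum[OF linear_iff_module_hom[THEN iffD1, OF br_lin1[of y]]] .
lemma br_sum2: "br y (\<Sum>i\<in>I. f i) = (\<Sum>i\<in>I. br y (f i))"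
  using module_hom.sum[OF linear_iff_module_hom[THEN iffD1, OF br_lin2[of y]]] .
lemma br_self: "br x x = 0" using lie by (simp add: lie_algebra_def)
lemma br_anti: "br x y = - br y x"
proof -
  have "0 = br (x + y) (x + y)" by (simp add: br_self)
  also have "\<dots> = br x x + br y x + (br x y + br y y)" by (simp only: br_add1 br_add2)
  also have "\<dots> = br x y + br y x" by (simp add: br_self)
  finally show ?thesis by (subst eq_neg_iff_add_eq_0) (rule sym)
qed

lemma dual_add: "dual_elem scale u \<Longrightarrow> u (x + y) = u x + u y"
  unfolding dual_elem_def Vector_Spaces.linear_iff by blast
lemma dual_scale: "dual_elem scale u \<Longrightarrow> u (scale c x) = c * u x"
  unfolding dual_elem_def Vector_Spaces.linear_iff by blast
lemma dual_zero: "dual_elem scale u \<Longrightarrow> u 0 = 0"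
  using dual_scale[of u 0 0] by (simp only: scale_zero_left mult_zero_left)
lemma dual_neg: "dual_elem scale u \<Longrightarrow> u (- x) = - u x"
proof -
  assume u: "dual_elem scale u"
  have "u (- x) + u x = 0" using dual_add[OF u, of "-x" x] dual_zero[OF u] by simp
  then show ?thesis by (simp add: eq_neg_iff_add_eq_0)
qed
lemma dual_sum: assumes u: "dual_elem scale u" shows "u (\<Sum>i\<in>I. f i) = (\<Sum>i\<in>I. u (f i))"
proof (induction I rule: infinite_finite_induct)
  case (infinite A) then show ?case using dual_zero[OF u] by simp
next
  case empty then show ?case using dual_zero[OF u] by simp
next
  case (insert x F) then show ?case by (simp add: dual_add[OF u])
qed
lemma dual_diff: "dual_elem scale u \<Longrightarrow> u (x - y) = u x - u y"
proof -
  assume u: "dual_elem scale u"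
  have "u (x + - y) = u x + u (- y)" by (rule dual_add[OF u])
  then show ?thesis by (simp add: dual_neg[OF u])
qed

lemma vs_k: "vector_space ((*) :: 'k \<Rightarrow> 'k \<Rightarrow> 'k)"
  by unfold_locales (auto simp: algebra_simps)

lemma dual_ad: "dual_elem scale v \<Longrightarrow> dual_elem scale (ad_star br x v)"
  unfolding ad_star_def dual_elem_def Vector_Spaces.linear_iff using VS vs_k
  by (auto simp: br_add2 br_scale2)

lemma sep: assumes "x \<noteq> 0" shows "\<exists>\<eta>. dual_elem scale \<eta> \<and> \<eta> x \<noteq> 0"
proof -
  have vp: "vector_space_pair scale ((*) :: 'k \<Rightarrow> 'k \<Rightarrow> 'k)"
    unfolding vector_space_pair_def using VS vs_k by simp
  have ind: "\<not> dependent {x}"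
    using independent_insert[of x "{}"] assms by (simp add: span_empty independent_empty)
  define \<eta> where "\<eta> = vector_space_pair.construct scale ((*) :: 'k \<Rightarrow> 'k \<Rightarrow> 'k) {x} (\<lambda>_. 1)"
  have "dual_elem scale \<eta>" unfolding dual_elem_def \<eta>_def
    by (rule vector_space_pair.linear_construct[OF vp ind])
  moreover have "\<eta> x = 1" unfolding \<eta>_def
    by (rule vector_space_pair.construct_basis[OF vp ind]) simp
  ultimately show ?thesis by (intro exI[of _ \<eta>]) simp
qed

lemma sep_eq: "(\<And>\<eta>. dual_elem scale \<eta> \<Longrightarrow> \<eta> x = \<eta> y) \<Longrightarrow> x = y"
proof (rule ccontr)
  assume h: "\<And>\<eta>. dual_elem scale \<eta> \<Longrightarrow> \<eta> x = \<eta> y" and "x \<noteq> y"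
  then obtain \<eta> where "dual_elem scale \<eta>" "\<eta> (x - y) \<noteq> 0" using sep[of "x - y"] by auto
  then show False using h by (simp add: dual_diff)
qed

lemma Psi_eq:
  assumes "\<And>\<eta>. dual_elem scale \<eta> \<Longrightarrow> \<eta> y = pair P (us @ [\<eta>])"
  shows "Psi scale P us = y"
  unfolding Psi_def
proof (rule the_equality)
  show "\<forall>\<eta>. dual_elem scale \<eta> \<longrightarrow> \<eta> y = pair P (us @ [\<eta>])" using assms by blast
  fix z assume "\<forall>\<eta>. dual_elem scale \<eta> \<longrightarrow> \<eta> z = pair P (us @ [\<eta>])"
  then show "z = y" using assms by (intro sep_eq) auto
qed

definition Cv :: "'g list \<Rightarrow> ('g \<Rightarrow> 'k) list \<Rightarrow> 'g" where
  "Cv X W = (\<Sum>k<length X. scale ((-1)^k * D (dl k X) W) (X!k))"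

definition Fd :: "'g list \<Rightarrow> ('g \<Rightarrow> 'k) list \<Rightarrow> 'g" where
  "Fd X W = scale ((-1)^length W) (Cv X W)"

definition PsiF :: "('k, 'g) mvec \<Rightarrow> ('g \<Rightarrow> 'k) list \<Rightarrow> 'g" where
  "PsiF P W = (\<Sum>i<length P. scale (fst (P!i)) (Fd (snd (P!i)) W))"

lemma eta_Cv: "dual_elem scale \<eta> \<Longrightarrow> \<eta> (Cv X W) = D X (\<eta> # W)"
  by (simp add: Cv_def dual_sum dual_scale algebra_simps)

lemma eta_Fd: "dual_elem scale \<eta> \<Longrightarrow> \<eta> (Fd X W) = (-1)^length W * D X (\<eta> # W)"
  by (simp add: Fd_def dual_scale eta_Cv)

lemma pair_nth: "pair P us = (\<Sum>i<length P. fst (P!i) * D (snd (P!i)) us)"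
  unfolding pair_def det_pair_D by (simp add: sum_list_sum_nth atLeast0LessThan)

lemma Psi_PsiF: "Psi scale P W = PsiF P W"
proof (rule Psi_eq)
  fix \<eta> assume e: "dual_elem scale \<eta>"
  show "\<eta> (PsiF P W) = pair P (W @ [\<eta>])"
    unfolding PsiF_def pair_nth by (simp add: dual_sum[OF e] dual_scale[OF e] eta_Fd[OF e] D_snoc)
qed

end


lemma S2_congs:
  "(\<And>s A B. length A = a \<Longrightarrow> length B = b \<Longrightarrow> set A \<subseteq> set w \<Longrightarrow> set B \<subseteq> set w \<Longrightarrow> F s A B = G s A B)
   \<Longrightarrow> S2 a b w F = S2 a b w G"
proof (induction w arbitrary: a b F G)
  case Nil then show ?case by (simp add: S2.simps)
next
  case (Cons u w)
  show ?case unfolding S2.simps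
    by (intro arg_cong2[where f="(+)"] if_cong refl Cons.IH) (auto intro!: Cons.prems)
qed

lemma S3_congs:
  "(\<And>s A B C. length A = a \<Longrightarrow> length B = b \<Longrightarrow> length C = c \<Longrightarrow>
      set A \<subseteq> set w \<Longrightarrow> set B \<subseteq> set w \<Longrightarrow> set C \<subseteq> set w \<Longrightarrow> F s A B C = G s A B C)
    \<Longrightarrow> S3 a b c w F = S3 a b c w G"
proof (induction w arbitrary: a b c F G)
  case Nil then show ?case by (simp add: S3.simps)
next
  case (Cons u w)
  show ?case unfolding S3.simps
    by (intro arg_cong2[where f="(+)"] if_cong refl Cons.IH) (auto intro!: Cons.prems)
qed

lemma S2_sum2:
  "(\<Sum>i<n. \<Sum>j<m. (c i j :: 'b::comm_ring) * S2 a b w (F i j)) = S2 a b w (\<lambda>s A B. \<Sum>i<n. \<Sum>j<m. c i j * F i j s A B)"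
  by (simp add: S2_cmult S2_sum)

lemma S3_sum2:
  "(\<Sum>i<n. \<Sum>j<m. (c i j :: 'b::comm_ring) * S3 a b b' w (F i j)) = S3 a b b' w (\<lambda>s A B C. \<Sum>i<n. \<Sum>j<m. c i j * F i j s A B C)"
  by (simp add: S3_cmult S3_sum)

lemma D_single[simp]: "D [z] [v] = v z"
  by (simp add: dl_def)

declare D.simps(2)[simp del]

context LA begin

lemma LapZ:
  fixes \<eta> :: "'g \<Rightarrow> 'k" and us :: "('g \<Rightarrow> 'k) list"
  assumes i: "i < length X" and j: "j < length Y" and X: "length X = Suc p" and Y: "length Y = Suc q"
  shows "D (br (X!i) (Y!j) # dl i X @ dl j Y) (\<eta> # us) =
     S2 p q us (\<lambda>s A B. of_int s * \<eta> (br (X!i) (Y!j)) * D (dl i X) A * D (dl j Y) B)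
   + (if 0 < p then S3 1 (p-1) q us (\<lambda>s V0 V1 V2. - (of_int s * hd V0 (br (X!i) (Y!j)) * D (dl i X) (\<eta>#V1) * D (dl j Y) V2)) else 0)
   + (if 0 < q then S3 1 p (q-1) us (\<lambda>s V0 V1 V2. (-1)^(Suc p) * (of_int s * hd V0 (br (X!i) (Y!j)) * D (dl i X) V1 * D (dl j Y) (\<eta>#V2))) else 0)"
proof -
  let ?z = "br (X!i) (Y!j)"
  have lx: "length (dl i X) = p" using i X by simp
  have ly: "length (dl j Y) = q" using j Y by simp
  have "D (?z # dl i X @ dl j Y) (\<eta> # us) = D ([?z] @ dl i X @ dl j Y) (\<eta> # us)" by simp
  also have "\<dots> = S3 1 p q (\<eta> # us) (\<lambda>s V0 V1 V2. of_int s * D [?z] V0 * D (dl i X) V1 * D (dl j Y) V2)"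
    using Laplace3[of "[?z]" "dl i X" "dl j Y" "\<eta> # us"] lx ly by simp
  also have "\<dots> = S3 0 p q us (\<lambda>s V0 V1 V2. of_int s * D [?z] (\<eta>#V0) * D (dl i X) V1 * D (dl j Y) V2)
     + (if 0 < p then S3 1 (p-1) q us (\<lambda>s V0 V1 V2. of_int ((-1)^1 * s) * D [?z] V0 * D (dl i X) (\<eta>#V1) * D (dl j Y) V2) else 0)
     + (if 0 < q then S3 1 p (q-1) us (\<lambda>s V0 V1 V2. of_int ((-1)^(1+p) * s) * D [?z] V0 * D (dl i X) V1 * D (dl j Y) (\<eta>#V2)) else 0)"
    by (simp add: S3.simps(2))
  also have "S3 0 p q us (\<lambda>s V0 V1 V2. of_int s * D [?z] (\<eta>#V0) * D (dl i X) V1 * D (dl j Y) V2)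
     = S2 p q us (\<lambda>s A B. of_int s * \<eta> ?z * D (dl i X) A * D (dl j Y) B)"
    by (simp add: S3_zero1 dl_def)
  also have "(if 0 < p then S3 1 (p-1) q us (\<lambda>s V0 V1 V2. of_int ((-1)^1 * s) * D [?z] V0 * D (dl i X) (\<eta>#V1) * D (dl j Y) V2) else 0)
     = (if 0 < p then S3 1 (p-1) q us (\<lambda>s V0 V1 V2. - (of_int s * hd V0 ?z * D (dl i X) (\<eta>#V1) * D (dl j Y) V2)) else 0)"
  proof (intro if_cong refl S3_congs)
    fix s and V0 V1 V2 :: "('g \<Rightarrow> 'k) list" assume "length V0 = 1"
    then obtain v where "V0 = [v]" by (cases V0) auto
    then show "of_int ((-1)^1 * s) * D [?z] V0 * D (dl i X) (\<eta>#V1) * D (dl j Y) V2 =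
        - (of_int s * hd V0 ?z * D (dl i X) (\<eta>#V1) * D (dl j Y) V2)" by (simp add: dl_def)
  qed
  also have "(if 0 < q then S3 1 p (q-1) us (\<lambda>s V0 V1 V2. of_int ((-1)^(1+p) * s) * D [?z] V0 * D (dl i X) V1 * D (dl j Y) (\<eta>#V2)) else 0)
     = (if 0 < q then S3 1 p (q-1) us (\<lambda>s V0 V1 V2. (-1)^(Suc p) * (of_int s * hd V0 ?z * D (dl i X) V1 * D (dl j Y) (\<eta>#V2))) else 0)"
  proof (intro if_cong refl S3_congs)
    fix s and V0 V1 V2 :: "('g \<Rightarrow> 'k) list" assume "length V0 = 1"
    then obtain v where "V0 = [v]" by (cases V0) auto
    then show "of_int ((-1)^(1+p) * s) * D [?z] V0 * D (dl i X) V1 * D (dl j Y) (\<eta>#V2) =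
        (-1)^(Suc p) * (of_int s * hd V0 ?z * D (dl i X) V1 * D (dl j Y) (\<eta>#V2))" by (simp add: dl_def)
  qed
  finally show ?thesis .
qed


lemma v_brF1:
  assumes v: "dual_elem scale v"
  shows "v (br (Fd Y A) x) = (-1)^length A * (\<Sum>j<length Y. (-1)^j * D (dl j Y) A * v (br (Y!j) x))"
  by (simp add: Fd_def Cv_def br_scale1 br_sum1 dual_scale[OF v] dual_sum[OF v] sum_distrib_left algebra_simps)

lemma v_brF2:
  assumes v: "dual_elem scale v"
  shows "v (br x (Fd Y A)) = (-1)^length A * (\<Sum>j<length Y. (-1)^j * D (dl j Y) A * v (br x (Y!j)))"
  by (simp add: Fd_def Cv_def br_scale2 br_sum2 dual_scale[OF v] dual_sum[OF v] sum_distrib_left algebra_simps)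

lemma K3:
  assumes e: "dual_elem scale \<eta>"
  shows "\<eta> (br (Fd X A) (Fd Y B)) = (-1)^(length A + length B) *
     (\<Sum>i<length X. \<Sum>j<length Y. (-1)^(i+j) * \<eta> (br (X!i) (Y!j)) * D (dl i X) A * D (dl j Y) B)"
proof -
  have "\<eta> (br (Fd X A) (Fd Y B)) = (-1)^length A * (\<Sum>i<length X. (-1)^i * D (dl i X) A * \<eta> (br (X!i) (Fd Y B)))"
    by (rule v_brF1[OF e])
  also have "\<dots> = (-1)^length A * (\<Sum>i<length X. (-1)^i * D (dl i X) A *
      ((-1)^length B * (\<Sum>j<length Y. (-1)^j * D (dl j Y) B * \<eta> (br (X!i) (Y!j)))))"
    by (simp add: v_brF2[OF e])
  also have "\<dots> = (-1)^(length A + length B) *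
     (\<Sum>i<length X. \<Sum>j<length Y. (-1)^(i+j) * \<eta> (br (X!i) (Y!j)) * D (dl i X) A * D (dl j Y) B)"
    by (simp add: sum_distrib_left power_add algebra_simps)
  finally show ?thesis .
qed

lemma K1:
  assumes e: "dual_elem scale \<eta>" and v: "dual_elem scale v"
  shows "\<eta> (Fd X (ad_star br (Fd Y A) v # B)) = - ((-1)^(Suc (length B) + length A)) *
     (\<Sum>i<length X. \<Sum>j<length Y. (-1)^(i+j) * v (br (X!i) (Y!j)) * D (dl i X) (\<eta>#B) * D (dl j Y) A)"
proof -
  let ?a = "ad_star br (Fd Y A) v"
  have "\<eta> (Fd X (?a # B)) = (-1)^Suc (length B) * D X (\<eta> # ?a # B)"
    by (simp add: eta_Fd[OF e])
  also have "\<dots> = - ((-1)^Suc (length B) * D X (?a # \<eta> # B))"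
    by (subst D_swap) simp
  also have "D X (?a # \<eta> # B) = (\<Sum>i<length X. (-1)^i * ?a (X!i) * D (dl i X) (\<eta>#B))"
    by (rule D.simps(2))
  also have "\<dots> = (\<Sum>i<length X. (-1)^i * ((-1)^length A * (\<Sum>j<length Y. (-1)^j * D (dl j Y) A * v (br (X!i) (Y!j))))
      * D (dl i X) (\<eta>#B))"
  proof (intro sum.cong refl)
    fix i
    have "?a (X!i) = - v (br (Fd Y A) (X!i))" by (simp add: ad_star_def)
    also have "\<dots> = (-1)^length A * (\<Sum>j<length Y. (-1)^j * D (dl j Y) A * v (br (X!i) (Y!j)))"
    proof -
      have "\<And>j. v (br (Y!j) (X!i)) = - v (br (X!i) (Y!j))"
        by (subst br_anti) (simp add: dual_neg[OF v])
      then show ?thesis by (simp add: v_brF1[OF v] sum_negf)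
    qed
    finally show "(-1)^i * ?a (X!i) * D (dl i X) (\<eta>#B) = (-1)^i * ((-1)^length A * (\<Sum>j<length Y. (-1)^j * D (dl j Y) A * v (br (X!i) (Y!j))))
      * D (dl i X) (\<eta>#B)" by simp
  qed
  finally show ?thesis
    by (simp add: sum_distrib_left sum_distrib_right power_add algebra_simps sum_negf)
qed

lemma K2:
  assumes e: "dual_elem scale \<eta>" and v: "dual_elem scale v"
  shows "\<eta> (Fd Y (ad_star br (Fd X A) v # B)) = (-1)^(Suc (length B) + length A) *
     (\<Sum>i<length X. \<Sum>j<length Y. (-1)^(i+j) * v (br (X!i) (Y!j)) * D (dl i X) A * D (dl j Y) (\<eta>#B))"
proof -
  let ?a = "ad_star br (Fd X A) v"
  have "\<eta> (Fd Y (?a # B)) = (-1)^Suc (length B) * D Y (\<eta> # ?a # B)"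
    by (simp add: eta_Fd[OF e])
  also have "\<dots> = - ((-1)^Suc (length B) * D Y (?a # \<eta> # B))"
    by (subst D_swap) simp
  also have "D Y (?a # \<eta> # B) = (\<Sum>j<length Y. (-1)^j * ?a (Y!j) * D (dl j Y) (\<eta>#B))"
    by (rule D.simps(2))
  also have "\<dots> = (\<Sum>j<length Y. (-1)^j * (- ((-1)^length A * (\<Sum>i<length X. (-1)^i * D (dl i X) A * v (br (X!i) (Y!j)))))
      * D (dl j Y) (\<eta>#B))"
    by (intro sum.cong refl) (simp add: ad_star_def v_brF1[OF v])
  finally have "\<eta> (Fd Y (?a # B)) = - ((-1)^Suc (length B) *
     (\<Sum>j<length Y. (-1)^j * (- ((-1)^length A * (\<Sum>i<length X. (-1)^i * D (dl i X) A * v (br (X!i) (Y!j)))))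
      * D (dl j Y) (\<eta>#B)))" .
  also have "\<dots> = (-1)^(Suc (length B) + length A) *
     (\<Sum>j<length Y. \<Sum>i<length X. (-1)^(i+j) * v (br (X!i) (Y!j)) * D (dl i X) A * D (dl j Y) (\<eta>#B))"
    by (simp add: sum_distrib_left sum_distrib_right power_add algebra_simps sum_negf)
  also have "\<dots> = (-1)^(Suc (length B) + length A) *
     (\<Sum>i<length X. \<Sum>j<length Y. (-1)^(i+j) * v (br (X!i) (Y!j)) * D (dl i X) A * D (dl j Y) (\<eta>#B))"
    by (subst sum.swap) simp
  finally show ?thesis .
qed


lemma S3_neg: "- S3 a b c w F = S3 a b c w (\<lambda>s A B C. - F s A B C)"
  by (rule S3_hom) simp_all

lemma DEC:
  fixes \<eta> :: "'g \<Rightarrow> 'k" and us :: "('g \<Rightarrow> 'k) list"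
  assumes e: "dual_elem scale \<eta>" and du: "\<forall>u\<in>set us. dual_elem scale u"
    and X: "length X = Suc p" and Y: "length Y = Suc q" and lu: "length us = p + q"
  shows "(-1)^(p+q) * (\<Sum>i<length X. \<Sum>j<length Y. (-1)^(i+j) * D (br (X!i) (Y!j) # dl i X @ dl j Y) (\<eta>#us))
   = (-1)^(p*q) * (if p = 0 then 0 else S3 q 1 (p-1) us (\<lambda>s A V B. of_int s * \<eta> (Fd X (ad_star br (Fd Y A) (hd V) # B))))
   - (if q = 0 then 0 else S3 p 1 (q-1) us (\<lambda>s A V B. of_int s * \<eta> (Fd Y (ad_star br (Fd X A) (hd V) # B))))
   + S2 p q us (\<lambda>s A B. of_int s * \<eta> (br (Fd X A) (Fd Y B)))"
proof -
  define c where "c i j = ((-1)^(p+q) * (-1)^(i+j) :: 'k)" for i j :: nat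
  define TA where "TA i j = S2 p q us (\<lambda>s A B. of_int s * \<eta> (br (X!i) (Y!j)) * D (dl i X) A * D (dl j Y) B)" for i j
  define TB where "TB i j = (if 0 < p then S3 1 (p-1) q us (\<lambda>s V0 V1 V2. - (of_int s * hd V0 (br (X!i) (Y!j)) * D (dl i X) (\<eta>#V1) * D (dl j Y) V2)) else 0)" for i j
  define TC where "TC i j = (if 0 < q then S3 1 p (q-1) us (\<lambda>s V0 V1 V2. (-1)^(Suc p) * (of_int s * hd V0 (br (X!i) (Y!j)) * D (dl i X) V1 * D (dl j Y) (\<eta>#V2))) else 0)" for i j
  have "(-1)^(p+q) * (\<Sum>i<length X. \<Sum>j<length Y. (-1)^(i+j) * D (br (X!i) (Y!j) # dl i X @ dl j Y) (\<eta>#us))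
      = (\<Sum>i<length X. \<Sum>j<length Y. c i j * (TA i j + TB i j + TC i j))"
    unfolding sum_distrib_left
    by (intro sum.cong refl) (simp add: LapZ[OF _ _ X Y] TA_def TB_def TC_def c_def mult.assoc)
  also have "\<dots> = (\<Sum>i<length X. \<Sum>j<length Y. c i j * TA i j) + (\<Sum>i<length X. \<Sum>j<length Y. c i j * TB i j)
      + (\<Sum>i<length X. \<Sum>j<length Y. c i j * TC i j)"
    by (simp add: distrib_left sum.distrib)
  also have "(\<Sum>i<length X. \<Sum>j<length Y. c i j * TA i j) = S2 p q us (\<lambda>s A B. of_int s * \<eta> (br (Fd X A) (Fd Y B)))"
  proof -
    have "(\<Sum>i<length X. \<Sum>j<length Y. c i j * TA i j) = S2 p q us (\<lambda>s A B. \<Sum>i<length X. \<Sum>j<length Y.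
        c i j * (of_int s * \<eta> (br (X!i) (Y!j)) * D (dl i X) A * D (dl j Y) B))"
      unfolding TA_def by (rule S2_sum2)
    also have "\<dots> = S2 p q us (\<lambda>s A B. of_int s * \<eta> (br (Fd X A) (Fd Y B)))"
    proof (rule S2_congs)
      fix s and A B :: "('g \<Rightarrow> 'k) list" assume "length A = p" "length B = q"
      then show "(\<Sum>i<length X. \<Sum>j<length Y. c i j * (of_int s * \<eta> (br (X!i) (Y!j)) * D (dl i X) A * D (dl j Y) B))
          = of_int s * \<eta> (br (Fd X A) (Fd Y B))"
        by (simp add: K3[OF e] c_def sum_distrib_left algebra_simps)
    qed
    finally show ?thesis .
  qed
  also have "(\<Sum>i<length X. \<Sum>j<length Y. c i j * TB i j) =
      (-1)^(p*q) * (if p = 0 then 0 else S3 q 1 (p-1) us (\<lambda>s A V B. of_int s * \<eta> (Fd X (ad_star br (Fd Y A) (hd V) # B))))"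
  proof (cases "p = 0")
    case True then show ?thesis by (simp add: TB_def)
  next
    case False
    have "(\<Sum>i<length X. \<Sum>j<length Y. c i j * TB i j) = S3 1 (p-1) q us (\<lambda>s V0 V1 V2. \<Sum>i<length X. \<Sum>j<length Y.
        c i j * - (of_int s * hd V0 (br (X!i) (Y!j)) * D (dl i X) (\<eta>#V1) * D (dl j Y) V2))"
      unfolding TB_def using False by (simp add: S3_sum2)
    also have "\<dots> = S3 q 1 (p-1) us (\<lambda>s C A B. \<Sum>i<length X. \<Sum>j<length Y.
        c i j * - (of_int ((-1)^(q*(1+(p-1))) * s) * hd A (br (X!i) (Y!j)) * D (dl i X) (\<eta>#B) * D (dl j Y) C))"
      by (rule S3_rot)
    also have "\<dots> = S3 q 1 (p-1) us (\<lambda>s A V B. (-1)^(p*q) * (of_int s * \<eta> (Fd X (ad_star br (Fd Y A) (hd V) # B))))"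
    proof (rule S3_congs)
      fix s and A V B :: "('g \<Rightarrow> 'k) list"
      assume l: "length A = q" "length V = 1" "length B = p - 1" and sV: "set V \<subseteq> set us"
      have v: "dual_elem scale (hd V)" using l(2) sV du by (cases V) auto
      have pp: "1 + (p - 1) = p" "Suc (p - 1) = p" using False by auto
      show "(\<Sum>i<length X. \<Sum>j<length Y. c i j * - (of_int ((-1)^(q*(1+(p-1))) * s) * hd V (br (X!i) (Y!j)) * D (dl i X) (\<eta>#B) * D (dl j Y) A))
          = (-1)^(p*q) * (of_int s * \<eta> (Fd X (ad_star br (Fd Y A) (hd V) # B)))"
        unfolding K1[OF e v] l(1) l(3) pp
        by (simp add: c_def sum_distrib_left power_add algebra_simps)
    qed
    also have "\<dots> = (-1)^(p*q) * S3 q 1 (p-1) us (\<lambda>s A V B. of_int s * \<eta> (Fd X (ad_star br (Fd Y A) (hd V) # B)))"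
      by (simp add: S3_cmult)
    finally show ?thesis using False by simp
  qed
  also have "(\<Sum>i<length X. \<Sum>j<length Y. c i j * TC i j) =
      - (if q = 0 then 0 else S3 p 1 (q-1) us (\<lambda>s A V B. of_int s * \<eta> (Fd Y (ad_star br (Fd X A) (hd V) # B))))"
  proof (cases "q = 0")
    case True then show ?thesis by (simp add: TC_def)
  next
    case False
    have "(\<Sum>i<length X. \<Sum>j<length Y. c i j * TC i j) = S3 1 p (q-1) us (\<lambda>s V0 V1 V2. \<Sum>i<length X. \<Sum>j<length Y.
        c i j * ((-1)^(Suc p) * (of_int s * hd V0 (br (X!i) (Y!j)) * D (dl i X) V1 * D (dl j Y) (\<eta>#V2))))"
      unfolding TC_def using False by (simp add: S3_sum2)
    also have "\<dots> = S3 p 1 (q-1) us (\<lambda>s B A C. \<Sum>i<length X. \<Sum>j<length Y.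
        c i j * ((-1)^(Suc p) * (of_int ((-1)^(1*p) * s) * hd A (br (X!i) (Y!j)) * D (dl i X) B * D (dl j Y) (\<eta>#C))))"
      by (rule S3_swap12)
    also have "\<dots> = S3 p 1 (q-1) us (\<lambda>s A V B. - (of_int s * \<eta> (Fd Y (ad_star br (Fd X A) (hd V) # B))))"
    proof (rule S3_congs)
      fix s and A V B :: "('g \<Rightarrow> 'k) list"
      assume l: "length A = p" "length V = 1" "length B = q - 1" and sV: "set V \<subseteq> set us"
      have v: "dual_elem scale (hd V)" using l(2) sV du by (cases V) auto
      have qq: "Suc (q - 1) = q" using False by auto
      show "(\<Sum>i<length X. \<Sum>j<length Y. c i j * ((-1)^(Suc p) * (of_int ((-1)^(1*p) * s) * hd V (br (X!i) (Y!j)) * D (dl i X) A * D (dl j Y) (\<eta>#B))))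
          = - (of_int s * \<eta> (Fd Y (ad_star br (Fd X A) (hd V) # B)))"
        unfolding K2[OF e v] l(1) l(3) qq
        by (simp add: c_def sum_distrib_left power_add algebra_simps sum_negf)
    qed
    also have "\<dots> = - S3 p 1 (q-1) us (\<lambda>s A V B. of_int s * \<eta> (Fd Y (ad_star br (Fd X A) (hd V) # B)))"
      by (simp add: S3_neg)
    finally show ?thesis using False by simp
  qed
  finally show ?thesis by (simp add: algebra_simps)
qed

end


lemma sum_list_map_upt: "sum_list (map f [0..<n]) = (\<Sum>i<n. f i)"
  by (induction n) auto

lemma sum_list_map_nth: "sum_list (map f xs) = (\<Sum>i<length xs. f (xs!i))"
  by (simp add: sum_list_sum_nth atLeast0LessThan)

lemma sum_list_concat_map: "sum_list (map g (concat xss)) = sum_list (map (\<lambda>xs. sum_list (map g xs)) xss)"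
  by (induction xss) auto

lemma sl_concat: "sum_list (concat xss) = sum_list (map sum_list xss)"
  by (induction xss) auto

lemma D_lin1: "D X ((\<lambda>y. \<Sum>b\<in>I. d b * f b y) # B) = (\<Sum>b\<in>I. d b * D X (f b # B))"
  by (simp add: D.simps(2) sum_distrib_left sum_distrib_right algebra_simps sum.swap[of _ I])

lemma D_lin2: "D X (a # (\<lambda>y. \<Sum>b\<in>I. d b * f b y) # B) = (\<Sum>b\<in>I. d b * D X (a # f b # B))"
proof -
  have "D X (a # (\<lambda>y. \<Sum>b\<in>I. d b * f b y) # B) = (\<Sum>k<length X. (-1)^k * a (X!k) * D (dl k X) ((\<lambda>y. \<Sum>b\<in>I. d b * f b y) # B))"
    by (rule D.simps(2))
  also have "\<dots> = (\<Sum>k<length X. (-1)^k * a (X!k) * (\<Sum>b\<in>I. d b * D (dl k X) (f b # B)))"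
    by (simp add: D_lin1)
  also have "\<dots> = (\<Sum>b\<in>I. d b * (\<Sum>k<length X. (-1)^k * a (X!k) * D (dl k X) (f b # B)))"
    by (simp add: sum_distrib_left sum_distrib_right algebra_simps sum.swap[of _ I])
  also have "\<dots> = (\<Sum>b\<in>I. d b * D X (a # f b # B))"
    by (simp add: D.simps(2))
  finally show ?thesis .
qed

context LA begin

lemma ad_star_sum:
  assumes v: "dual_elem scale v"
  shows "ad_star br (\<Sum>b\<in>I. scale (d b) (z b)) v = (\<lambda>y. \<Sum>b\<in>I. d b * ad_star br (z b) v y)"
  by (rule ext) (simp add: ad_star_def br_sum1 br_scale1 dual_sum[OF v] dual_scale[OF v] sum_negf)

lemma eta_PsiF: "dual_elem scale \<eta> \<Longrightarrow> \<eta> (PsiF P W) = (\<Sum>a<length P. fst (P!a) * \<eta> (Fd (snd (P!a)) W))"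
  by (simp add: PsiF_def dual_sum dual_scale)

lemma lift1:
  assumes e: "dual_elem scale \<eta>" and v: "dual_elem scale v"
  shows "\<eta> (PsiF P (ad_star br (PsiF Q A) v # B)) =
    (\<Sum>a<length P. \<Sum>b<length Q. fst (P!a) * fst (Q!b) * \<eta> (Fd (snd (P!a)) (ad_star br (Fd (snd (Q!b)) A) v # B)))"
proof -
  have "\<eta> (PsiF P (ad_star br (PsiF Q A) v # B)) =
      (\<Sum>a<length P. fst (P!a) * \<eta> (Fd (snd (P!a)) (ad_star br (PsiF Q A) v # B)))"
    by (rule eta_PsiF[OF e])
  also have "\<dots> = (\<Sum>a<length P. fst (P!a) * (\<Sum>b<length Q. fst (Q!b) * \<eta> (Fd (snd (P!a)) (ad_star br (Fd (snd (Q!b)) A) v # B))))"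
  proof (intro sum.cong refl arg_cong2[where f="(*)"])
    fix a
    have "ad_star br (PsiF Q A) v = (\<lambda>y. \<Sum>b<length Q. fst (Q!b) * ad_star br (Fd (snd (Q!b)) A) v y)"
      unfolding PsiF_def by (rule ad_star_sum[OF v])
    then show "\<eta> (Fd (snd (P!a)) (ad_star br (PsiF Q A) v # B)) =
        (\<Sum>b<length Q. fst (Q!b) * \<eta> (Fd (snd (P!a)) (ad_star br (Fd (snd (Q!b)) A) v # B)))"
      by (simp add: eta_Fd[OF e] D_lin2 sum_distrib_left algebra_simps)
  qed
  also have "\<dots> = (\<Sum>a<length P. \<Sum>b<length Q. fst (P!a) * fst (Q!b) * \<eta> (Fd (snd (P!a)) (ad_star br (Fd (snd (Q!b)) A) v # B)))"
    by (simp add: sum_distrib_left mult.assoc)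
  finally show ?thesis .
qed

lemma lift3:
  assumes e: "dual_elem scale \<eta>"
  shows "\<eta> (br (PsiF P A) (PsiF Q B)) =
    (\<Sum>a<length P. \<Sum>b<length Q. fst (P!a) * fst (Q!b) * \<eta> (br (Fd (snd (P!a)) A) (Fd (snd (Q!b)) B)))"
  apply (simp add: PsiF_def br_sum1 br_sum2 br_scale1 br_scale2 dual_sum[OF e] dual_scale[OF e] sum_distrib_left mult.assoc)
  apply (subst sum.swap)
  apply (simp add: mult.left_commute)
  done


lemma pair_gerst:
  "pair (gerst br P Q) vs = (\<Sum>a<length P. \<Sum>b<length Q. fst (P!a) * fst (Q!b) *
     (\<Sum>i<length (snd (P!a)). \<Sum>j<length (snd (Q!b)). (-1)^(i+j) *
        D (br (snd (P!a) ! i) (snd (Q!b) ! j) # dl i (snd (P!a)) @ dl j (snd (Q!b))) vs))"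
  unfolding pair_def gerst_def gerst_dec_def dl_def det_pair_D
  by (simp add: sl_concat map_concat comp_def sum_list_map_upt sum_list_map_nth
      sum_distrib_left mult.assoc)

lemma neg1_sq: "((-1::'k)^n) * (-1)^n = 1"
  by (simp add: power_add[symmetric])

lemma main1:
  fixes us :: "('g \<Rightarrow> 'k) list"
  assumes P: "is_mvec (p+1) P" and Q: "is_mvec (q+1) Q" and lu: "length us = p+q"
    and du: "\<forall>u\<in>set us. dual_elem scale u"
  shows "Psi scale (gerst br P Q) us = scale ((-1)^(p*q)) (hbr scale br p q (Psi scale P) (Psi scale Q) us)"
proof -
  have PP: "Psi scale P = PsiF P" "Psi scale Q = PsiF Q" by (rule ext, rule Psi_PsiF)+
  have XP: "length (snd (P!a)) = Suc p" if "a < length P" for a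
    using P that unfolding is_mvec_def by (metis Suc_eq_plus1 nth_mem)
  have YQ: "length (snd (Q!b)) = Suc q" if "b < length Q" for b
    using Q that unfolding is_mvec_def by (metis Suc_eq_plus1 nth_mem)
  show ?thesis unfolding PP
  proof (rule Psi_eq)
    fix \<eta> :: "'g \<Rightarrow> 'k" assume e: "dual_elem scale \<eta>"
    define c where "c a b = fst (P!a) * fst (Q!b)" for a b
    define R1 where "R1 a b = (if p = 0 then 0 else S3 q 1 (p-1) us (\<lambda>s A V B. of_int s * \<eta> (Fd (snd (P!a)) (ad_star br (Fd (snd (Q!b)) A) (hd V) # B))))" for a b
    define R2 where "R2 a b = (if q = 0 then 0 else S3 p 1 (q-1) us (\<lambda>s A V B. of_int s * \<eta> (Fd (snd (Q!b)) (ad_star br (Fd (snd (P!a)) A) (hd V) # B))))" for a b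
    define R3 where "R3 a b = S2 p q us (\<lambda>s A B. of_int s * \<eta> (br (Fd (snd (P!a)) A) (Fd (snd (Q!b)) B)))" for a b
    have hom: "\<eta> (x + y) = \<eta> x + \<eta> y" "\<eta> 0 = 0" for x y by (simp_all add: dual_add[OF e] dual_zero[OF e])
    have E1: "\<eta> (if p = 0 then 0 else S3 q 1 (p-1) us (\<lambda>s A V B. scale (of_int s) (PsiF P (ad_star br (PsiF Q A) (hd V) # B))))
        = (\<Sum>a<length P. \<Sum>b<length Q. c a b * R1 a b)"
    proof (cases "p = 0")
      case True then show ?thesis by (simp add: R1_def dual_zero[OF e])
    next
      case False
      have "\<eta> (S3 q 1 (p-1) us (\<lambda>s A V B. scale (of_int s) (PsiF P (ad_star br (PsiF Q A) (hd V) # B))))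
          = S3 q 1 (p-1) us (\<lambda>s A V B. of_int s * \<eta> (PsiF P (ad_star br (PsiF Q A) (hd V) # B)))"
        by (simp add: S3_hom[of \<eta>, OF hom] dual_scale[OF e])
      also have "\<dots> = S3 q 1 (p-1) us (\<lambda>s A V B. \<Sum>a<length P. \<Sum>b<length Q. c a b *
          (of_int s * \<eta> (Fd (snd (P!a)) (ad_star br (Fd (snd (Q!b)) A) (hd V) # B))))"
      proof (rule S3_congs)
        fix s and A V B :: "('g \<Rightarrow> 'k) list" assume "length V = 1" "set V \<subseteq> set us"
        then have v: "dual_elem scale (hd V)" using du by (cases V) auto
        show "of_int s * \<eta> (PsiF P (ad_star br (PsiF Q A) (hd V) # B)) = (\<Sum>a<length P. \<Sum>b<length Q. c a b *
          (of_int s * \<eta> (Fd (snd (P!a)) (ad_star br (Fd (snd (Q!b)) A) (hd V) # B))))"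
          by (simp add: lift1[OF e v] c_def sum_distrib_left algebra_simps)
      qed
      also have "\<dots> = (\<Sum>a<length P. \<Sum>b<length Q. c a b * R1 a b)"
        using False by (simp add: R1_def S3_sum2)
      finally show ?thesis using False by simp
    qed
    have E2: "\<eta> (if q = 0 then 0 else S3 p 1 (q-1) us (\<lambda>s A V B. scale (of_int s) (PsiF Q (ad_star br (PsiF P A) (hd V) # B))))
        = (\<Sum>a<length P. \<Sum>b<length Q. c a b * R2 a b)"
    proof (cases "q = 0")
      case True then show ?thesis by (simp add: R2_def dual_zero[OF e])
    next
      case False
      have "\<eta> (S3 p 1 (q-1) us (\<lambda>s A V B. scale (of_int s) (PsiF Q (ad_star br (PsiF P A) (hd V) # B))))
          = S3 p 1 (q-1) us (\<lambda>s A V B. of_int s * \<eta> (PsiF Q (ad_star br (PsiF P A) (hd V) # B)))"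
        by (simp add: S3_hom[of \<eta>, OF hom] dual_scale[OF e])
      also have "\<dots> = S3 p 1 (q-1) us (\<lambda>s A V B. \<Sum>a<length P. \<Sum>b<length Q. c a b *
          (of_int s * \<eta> (Fd (snd (Q!b)) (ad_star br (Fd (snd (P!a)) A) (hd V) # B))))"
      proof (rule S3_congs)
        fix s and A V B :: "('g \<Rightarrow> 'k) list" assume "length V = 1" "set V \<subseteq> set us"
        then have v: "dual_elem scale (hd V)" using du by (cases V) auto
        have "of_int s * \<eta> (PsiF Q (ad_star br (PsiF P A) (hd V) # B)) = (\<Sum>b<length Q. \<Sum>a<length P. c a b *
          (of_int s * \<eta> (Fd (snd (Q!b)) (ad_star br (Fd (snd (P!a)) A) (hd V) # B))))"
          by (simp add: lift1[OF e v] c_def sum_distrib_left algebra_simps)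
        also have "\<dots> = (\<Sum>a<length P. \<Sum>b<length Q. c a b *
          (of_int s * \<eta> (Fd (snd (Q!b)) (ad_star br (Fd (snd (P!a)) A) (hd V) # B))))"
          by (rule sum.swap)
        finally show "of_int s * \<eta> (PsiF Q (ad_star br (PsiF P A) (hd V) # B)) = (\<Sum>a<length P. \<Sum>b<length Q. c a b *
          (of_int s * \<eta> (Fd (snd (Q!b)) (ad_star br (Fd (snd (P!a)) A) (hd V) # B))))" .
      qed
      also have "\<dots> = (\<Sum>a<length P. \<Sum>b<length Q. c a b * R2 a b)"
        using False by (simp add: R2_def S3_sum2)
      finally show ?thesis using False by simp
    qed
    have E3: "\<eta> (S2 p q us (\<lambda>s A B. scale (of_int s) (br (PsiF P A) (PsiF Q B))))
        = (\<Sum>a<length P. \<Sum>b<length Q. c a b * R3 a b)"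
    proof -
      have "\<eta> (S2 p q us (\<lambda>s A B. scale (of_int s) (br (PsiF P A) (PsiF Q B))))
          = S2 p q us (\<lambda>s A B. of_int s * \<eta> (br (PsiF P A) (PsiF Q B)))"
        by (simp add: S2_hom[of \<eta>, OF hom] dual_scale[OF e])
      also have "\<dots> = S2 p q us (\<lambda>s A B. \<Sum>a<length P. \<Sum>b<length Q. c a b *
          (of_int s * \<eta> (br (Fd (snd (P!a)) A) (Fd (snd (Q!b)) B))))"
        by (simp add: lift3[OF e] c_def sum_distrib_left algebra_simps)
      also have "\<dots> = (\<Sum>a<length P. \<Sum>b<length Q. c a b * R3 a b)"
        by (simp add: R3_def S2_sum2)
      finally show ?thesis .
    qed
    have lu': "length us = q + p" using lu by simp
    have "\<eta> (scale ((-1)^(p*q)) (hbr scale br p q (PsiF P) (PsiF Q) us))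
       = (-1)^(p*q) * ((\<Sum>a<length P. \<Sum>b<length Q. c a b * R1 a b)
          - (-1)^(q*p) * (\<Sum>a<length P. \<Sum>b<length Q. c a b * R2 a b)
          + (-1)^(q*p) * (\<Sum>a<length P. \<Sum>b<length Q. c a b * R3 a b))"
      unfolding hbr_S[OF lu'] by (simp add: dual_scale[OF e] dual_add[OF e] dual_diff[OF e] E1 E2 E3)
    also have "\<dots> = (\<Sum>a<length P. \<Sum>b<length Q. c a b * ((-1)^(p*q) * R1 a b - R2 a b + R3 a b))"
    proof -
      have s1: "(-1::'k)^(p*q) * (-1)^(q*p) = 1" using neg1_sq[of "p*q"] by (simp add: mult.commute)
      show ?thesis
        by (simp add: algebra_simps sum_distrib_left sum.distrib sum_subtractf s1)
    qed
    also have "\<dots> = (\<Sum>a<length P. \<Sum>b<length Q. c a b * ((-1)^(p+q) *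
        (\<Sum>i<length (snd (P!a)). \<Sum>j<length (snd (Q!b)). (-1)^(i+j) *
        D (br (snd (P!a) ! i) (snd (Q!b) ! j) # dl i (snd (P!a)) @ dl j (snd (Q!b))) (\<eta>#us))))"
    proof (intro sum.cong refl)
      fix a b assume a: "a \<in> {..<length P}" and b: "b \<in> {..<length Q}"
      show "c a b * ((-1)^(p*q) * R1 a b - R2 a b + R3 a b) = c a b * ((-1)^(p+q) *
        (\<Sum>i<length (snd (P!a)). \<Sum>j<length (snd (Q!b)). (-1)^(i+j) *
        D (br (snd (P!a) ! i) (snd (Q!b) ! j) # dl i (snd (P!a)) @ dl j (snd (Q!b))) (\<eta>#us)))"
        unfolding R1_def R2_def R3_def
        using DEC[OF e du XP YQ lu] a b by simp
    qed
    also have "\<dots> = pair (gerst br P Q) (us @ [\<eta>])"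
      unfolding pair_gerst
    proof (intro sum.cong refl)
      fix a b assume a: "a \<in> {..<length P}" and b: "b \<in> {..<length Q}"
      have "D (br (snd (P!a) ! i) (snd (Q!b) ! j) # dl i (snd (P!a)) @ dl j (snd (Q!b))) (us @ [\<eta>])
          = (-1)^(p+q) * D (br (snd (P!a) ! i) (snd (Q!b) ! j) # dl i (snd (P!a)) @ dl j (snd (Q!b))) (\<eta>#us)" for i j
        by (simp add: D_snoc lu)
      then show "c a b * ((-1)^(p+q) *
        (\<Sum>i<length (snd (P!a)). \<Sum>j<length (snd (Q!b)). (-1)^(i+j) *
        D (br (snd (P!a) ! i) (snd (Q!b) ! j) # dl i (snd (P!a)) @ dl j (snd (Q!b))) (\<eta>#us)))
        = fst (P!a) * fst (Q!b) * (\<Sum>i<length (snd (P!a)). \<Sum>j<length (snd (Q!b)). (-1)^(i+j) *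
        D (br (snd (P!a) ! i) (snd (Q!b) ! j) # dl i (snd (P!a)) @ dl j (snd (Q!b))) (us @ [\<eta>]))"
        by (simp add: c_def sum_distrib_left algebra_simps)
    qed
    finally show "\<eta> (scale ((-1)^(p*q)) (hbr scale br p q (PsiF P) (PsiF Q) us)) = pair (gerst br P Q) (us @ [\<eta>])" .
  qed
qed

end

theorem proposition7p2:
  fixes scale :: "'k::field \<Rightarrow> 'g::ab_group_add \<Rightarrow> 'g"
    and br :: "'g \<Rightarrow> 'g \<Rightarrow> 'g"
    and r P Q :: "('k, 'g) mvec"
    and p q :: nat
  assumes lie: "lie_algebra scale br"
    and r2: "is_mvec 2 r"
    and rr: "mvec_zero scale 3 (gerst br r r)"
    and P: "is_mvec (p + 1) P"
    and Q: "is_mvec (q + 1) Q"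
  shows "(\<forall>us. length us = p + q \<longrightarrow> (\<forall>u\<in>set us. dual_elem scale u) \<longrightarrow>
            Psi scale (gerst br P Q) us
              = scale ((-1) ^ (p * q)) (hbr scale br p q (Psi scale P) (Psi scale Q) us))
       \<and> (\<forall>us. length us = 1 + p \<longrightarrow> (\<forall>u\<in>set us. dual_elem scale u) \<longrightarrow>
            Psi scale (gerst br r P) us
              = scale ((-1) ^ p) (hbr scale br 1 p (Psi scale r) (Psi scale P) us))"
proof -
  have L: "LA scale br" by (rule LA.intro[OF lie])
  have r2': "is_mvec (1 + 1) r" using r2 by (simp add: numeral_2_eq_2)
  show ?thesis
  proof (intro conjI allI impI)
    fix us :: "('g \<Rightarrow> 'k) list"
    assume "length us = p + q" "\<forall>u\<in>set us. dual_elem scale u"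
    then show "Psi scale (gerst br P Q) us
              = scale ((-1) ^ (p * q)) (hbr scale br p q (Psi scale P) (Psi scale Q) us)"
      by (rule LA.main1[OF L P Q])
  next
    fix us :: "('g \<Rightarrow> 'k) list"
    assume "length us = 1 + p" "\<forall>u\<in>set us. dual_elem scale u"
    then show "Psi scale (gerst br r P) us
              = scale ((-1) ^ p) (hbr scale br 1 p (Psi scale r) (Psi scale P) us)"
      using LA.main1[OF L r2' P] by simp
  qed
qed

end
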